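(* Let $(E,\langle\cdot,\cdot\rangle)$ be a Hilbert space with norm $\|\cdot\|$, let $X$ be a Radon random vector on a probability space with values in $E$ and distribution $P$, let $r\in(0,+\infty)$ with $\int_E\|x\|^r\,dP(x)<+\infty$, let $n\ge1$, and assume that $K=\operatorname{supp}(P)$ is convex. If the $L^r$-distortion function $G_{r,n}^P$ has a strict local minimum at $a=(a_1,\ldots,a_n)\in E^n$, then $a_i\in K$ for every $i\in\{1,\ldots,n\}$. In particular, the following conclusions hold (whenever each $a_i$ is a non-isolated point of $K$): the components $a_1,\ldots,a_n$ are pairwise distinct; if $r\ge1$, then with $\Gamma=\{a_1,\ldots,a_n\}$, for every $i$ and every Borel set $C$ with $W_{a_i}(\Gamma)\subset C\subset V_{a_i}(\Gamma)$ one has $a_i\in\operatorname{argmin}_{y\in E}G_{r,1}^{P(\cdot\mid C)}(y)$; and if $r\ge1$ and (when $r=1$) $P(\{a_i\})=0$ for every $i$, then $\Gamma$ is an $L^r$-stationary $n$-quantizer for $P$ and $\Gamma$ is admissible for $P$. Moreover, if $r\ge2$, $P(\{a_i\})=0$ for every $i\in\{1,\ldots,n\}$ when $r>2$, and $K$ has nonempty interior, then $a_i$ is an interior point of $K$ for every $i$.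
   Context: $\operatorname{supp}(P)$ denotes the support of $P$. For a nonempty finite $\Gamma\subset E$, $d(x,\Gamma)=\min_{b\in\Gamma}\|x-b\|$. For a Borel probability $Q$ on $E$, $G_{r,n}^Q:E^n\to\mathbb R_+$, $G_{r,n}^Q(a_1,\ldots,a_n)=\int_E\min_{1\le i\le n}\|x-a_i\|^r\,dQ(x)$. A strict local minimum at $a$ means there is a neighbourhood $U$ of $a$ in $E^n$ with $G_{r,n}^P(b)>G_{r,n}^P(a)$ for all $b\in U\setminus\{a\}$. For a Borel $C$ with $P(C)>0$, $P(\cdot\mid C)=P(\cdot\cap C)/P(C)$. For finite $\Gamma\subset E$ and $b\in\Gamma$: $V_b(\Gamma)=\{x:\|x-b\|=d(x,\Gamma)\}$, $W_b(\Gamma)=\{x:\|x-b\|<d(x,\Gamma\setminus\{b\})\}$. A Voronoi partition induced by $\Gamma$ is a Borel partition $\{C_b(\Gamma):b\in\Gamma\}$ of $E$ with $C_b(\Gamma)\subset V_b(\Gamma)$. $\Gamma$ is admissible for $P$ if $P\big(\bigcup_{b\in\Gamma}W_b(\Gamma)\big)=1$. For $x\neq0$, $\nabla\|\cdot\|(x)=\langle x,\cdot\rangle/\|x\|\in E^*$ is the Gâteaux derivative of the norm. For $r\ge1$, a set $\Gamma$ with $\operatorname{card}(\Gamma)=n$ (and $P(\Gamma)=0$ if $r=1$) is an $L^r$-stationary $n$-quantizer for $P$ if there is a Voronoi partition $\{C_b(\Gamma)\}$ induced by $\Gamma$ with, for every $b\in\Gamma$, $P(C_b(\Gamma))>0$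 and $\mathbb E\big[\mathbf 1_{C_b(\Gamma)\setminus\{b\}}(X)\|X-b\|^{r-1}\nabla\|\cdot\|(b-X)\big]=0$ in $E^*$ (Gelfand integral). *)

theory Defs
  imports "HOL-Probability.Probability"
begin

definition measure_support :: "'a::topological_space measure \<Rightarrow> 'a set" where
  "measure_support P = {x. \<forall>U. open U \<and> x \<in> U \<longrightarrow> emeasure P U > 0}"

definition radon_measure :: "'a::topological_space measure \<Rightarrow> bool" where
  "radon_measure P \<longleftrightarrow> sets P = sets borel \<and>
     (\<forall>A\<in>sets borel. emeasure P A = (SUP K\<in>{K. compact K \<and> K \<subseteq> A}. emeasure P K))"

definition distortion :: "'a::real_normed_vector measure \<Rightarrow> real \<Rightarrow> nat \<Rightarrow> (nat \<Rightarrow> 'a) \<Rightarrow> real" where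
  "distortion Q r n a = (\<integral>x. (MIN i\<in>{..<n}. norm (x - a i) powr r) \<partial>Q)"

text \<open>Strict local minimum of a function on E^n (product topology; tuples are
  functions nat => E, only indices < n matter).\<close>
definition strict_local_min :: "nat \<Rightarrow> ((nat \<Rightarrow> 'a::metric_space) \<Rightarrow> real) \<Rightarrow> (nat \<Rightarrow> 'a) \<Rightarrow> bool" where
  "strict_local_min n G a \<longleftrightarrow> (\<exists>e>0. \<forall>b. (\<forall>i<n. dist (b i) (a i) < e) \<and> (\<exists>i<n. b i \<noteq> a i)
       \<longrightarrow> G b > G a)"

definition voronoi_V :: "'a::real_normed_vector \<Rightarrow> 'a set \<Rightarrow> 'a set" where
  "voronoi_V b \<Gamma> = {x. \<forall>c\<in>\<Gamma>. norm (x - b) \<le> norm (x - c)}"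

definition voronoi_W :: "'a::real_normed_vector \<Rightarrow> 'a set \<Rightarrow> 'a set" where
  "voronoi_W b \<Gamma> = {x. \<forall>c\<in>\<Gamma> - {b}. norm (x - b) < norm (x - c)}"

definition voronoi_partition :: "('a::real_normed_vector \<Rightarrow> 'a set) \<Rightarrow> 'a set \<Rightarrow> bool" where
  "voronoi_partition C \<Gamma> \<longleftrightarrow>
     (\<forall>b\<in>\<Gamma>. C b \<in> sets borel \<and> C b \<subseteq> voronoi_V b \<Gamma>) \<and>
     (\<forall>b\<in>\<Gamma>. \<forall>c\<in>\<Gamma>. b \<noteq> c \<longrightarrow> C b \<inter> C c = {}) \<and>
     (\<Union>b\<in>\<Gamma>. C b) = UNIV"

definition admissible :: "'a::real_normed_vector measure \<Rightarrow> 'a set \<Rightarrow> bool" where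
  "admissible P \<Gamma> \<longleftrightarrow> emeasure P (\<Union>b\<in>\<Gamma>. voronoi_W b \<Gamma>) = 1"

text \<open>The Gelfand integral in E^* of
  1_{C_b - {b}}(X) |X-b|^{r-1} grad|.|(b - X) vanishes, i.e. for every u in E the scalar
  function x |-> 1_{C_b-{b}}(x) |x-b|^{r-1} <b-x,u>/|b-x| is P-integrable with integral 0.\<close>
definition stationary_quantizer :: "'a::real_inner measure \<Rightarrow> real \<Rightarrow> nat \<Rightarrow> 'a set \<Rightarrow> bool" where
  "stationary_quantizer P r n \<Gamma> \<longleftrightarrow> finite \<Gamma> \<and> card \<Gamma> = n \<and>
     (r = 1 \<longrightarrow> emeasure P \<Gamma> = 0) \<and>
     (\<exists>C. voronoi_partition C \<Gamma> \<and>
        (\<forall>b\<in>\<Gamma>. emeasure P (C b) > 0 \<and>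
           (\<forall>u. integrable P (\<lambda>x. indicator (C b - {b}) x * norm (x - b) powr (r - 1)
                                     * (inner (b - x) u / norm (b - x))) \<and>
                (\<integral>x. indicator (C b - {b}) x * norm (x - b) powr (r - 1)
                       * (inner (b - x) u / norm (b - x)) \<partial>P) = 0)))"

end

theory Submission
  imports Defs
begin


lemma proj_exists:
  fixes S :: "'a::{real_inner,complete_space} set" and z :: 'a
  assumes cl: "closed S" and cv: "convex S" and ne: "S \<noteq> {}"
  shows "\<exists>p\<in>S. \<forall>w\<in>S. inner (z - p) (w - p) \<le> 0"
proof -
  define d where "d = infdist z S"
  have d0: "d \<ge> 0" unfolding d_def by (rule infdist_nonneg)
  have dle: "d \<le> dist z s" if "s \<in> S" for s unfolding d_def using that by (rule infdist_le)
  have "\<exists>s\<in>S. dist z s < d + 1 / (real k + 1)" for k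
  proof -
    have "Inf ((dist z) ` S) < d + 1 / (real k + 1)" unfolding d_def infdist_notempty[OF ne] by simp
    thus ?thesis using cInf_lessD[of "(dist z) ` S"] ne by blast
  qed
  then obtain s where sS: "\<And>k. s k \<in> S" and sd: "\<And>k. dist z (s k) < d + 1 / (real k + 1)"
    by metis
  have par: "norm (s m - s k)^2 \<le> 2 * (d + 1/(real m+1))^2 + 2 * (d + 1/(real k+1))^2 - 4 * d^2" for m k
  proof -
    have mid: "(1/2) *\<^sub>R s m + (1/2) *\<^sub>R s k \<in> S"
      using cv sS unfolding convex_def by (metis field_sum_of_halves divide_nonneg_nonneg zero_le_one zero_le_numeral)
    have "d \<le> norm (z - ((1/2) *\<^sub>R s m + (1/2) *\<^sub>R s k))" using dle[OF mid] by (simp add: dist_norm)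
    hence "d^2 \<le> norm (z - ((1/2) *\<^sub>R s m + (1/2) *\<^sub>R s k))^2" using d0 by (simp add: power_mono)
    moreover have "norm (s m - s k)^2 = 2 * norm (z - s m)^2 + 2 * norm (z - s k)^2 - 4 * norm (z - ((1/2) *\<^sub>R s m + (1/2) *\<^sub>R s k))^2"
      unfolding power2_norm_eq_inner by (simp add: inner_diff_left inner_diff_right inner_add_left inner_add_right inner_commute algebra_simps)
    moreover have "norm (z - s m)^2 \<le> (d + 1/(real m+1))^2" using sd[of m] by (simp add: dist_norm power_mono)
    moreover have "norm (z - s k)^2 \<le> (d + 1/(real k+1))^2" using sd[of k] by (simp add: dist_norm power_mono)
    ultimately show ?thesis by linarith
  qed
  have "Cauchy s"
  proof (rule metric_CauchyI)
    fix e :: real assume e: "e > 0"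
    obtain M :: nat where M0: "4 * (2*d + 1) / e^2 < real M" using reals_Archimedean2 by blast
    have e2: "e^2 > 0" using e by simp
    have "4 * (2*d + 1) < e^2 * real M" using M0 e2 by (simp add: divide_less_eq mult.commute)
    hence "4 * (2*d + 1) < e^2 * (real M + 1)" using e2 unfolding distrib_left by linarith
    hence M: "4 * (2*d + 1) / (real M + 1) < e^2" by (simp add: divide_less_eq)
    show "\<exists>M. \<forall>m\<ge>M. \<forall>n\<ge>M. dist (s m) (s n) < e"
    proof (intro exI allI impI)
      fix m k assume mk: "M \<le> m" "M \<le> k"
      define t where "t = 1 / (real M + 1)"
      have t0: "0 < t" "t \<le> 1" unfolding t_def by auto
      have tm: "1/(real m+1) \<le> t" "1/(real k+1) \<le> t" unfolding t_def using mk by (auto simp: frac_le)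
      have "norm (s m - s k)^2 \<le> 2 * (d + t)^2 + 2 * (d + t)^2 - 4 * d^2"
      proof -
        have "(d + 1/(real m+1))^2 \<le> (d + t)^2" by (rule power_mono) (use tm d0 in auto)
        moreover have "(d + 1/(real k+1))^2 \<le> (d + t)^2" by (rule power_mono) (use tm d0 in auto)
        ultimately show ?thesis using par[of m k] by linarith
      qed
      also have "\<dots> = 4 * (2*d*t + t*t)" by (simp add: power2_eq_square algebra_simps)
      also have "\<dots> \<le> 4 * (2*d + 1) * t" using t0 d0 by (simp add: algebra_simps mult_left_le)
      also have "\<dots> < e^2" using M unfolding t_def by simp
      finally have "norm (s m - s k)^2 < e^2" .
      thus "dist (s m) (s k) < e" using e by (simp add: dist_norm power_less_imp_less_base)
    qed
  qed
  then obtain p where lim: "s \<longlonglongrightarrow> p" using Cauchy_convergent_iff convergent_def by blast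
  have pS: "p \<in> S" using closed_sequentially[OF cl] sS lim by blast
  have "dist z p \<le> d"
  proof (rule LIMSEQ_le)
    show "(\<lambda>k. dist z (s k)) \<longlonglongrightarrow> dist z p" by (intro tendsto_intros lim)
    have "(\<lambda>k. d + inverse (real (Suc k))) \<longlonglongrightarrow> d" by (rule LIMSEQ_inverse_real_of_nat_add)
    thus "(\<lambda>k. d + 1 / (real k + 1)) \<longlonglongrightarrow> d" by (simp add: inverse_eq_divide add.commute)
    show "\<exists>N. \<forall>k\<ge>N. dist z (s k) \<le> d + 1 / (real k + 1)" using sd less_imp_le by blast
  qed
  hence pd: "dist z p = d" using dle[OF pS] by simp
  show ?thesis
  proof (intro bexI[OF _ pS] ballI)
    fix w assume wS: "w \<in> S"
    show "inner (z - p) (w - p) \<le> 0"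
    proof (rule ccontr)
      assume "\<not> ?thesis" hence pos: "inner (z - p) (w - p) > 0" by simp
      define q where "q = norm (w - p)^2"
      have q0: "q > 0" using pos unfolding q_def by (metis inner_zero_right less_irrefl norm_eq_zero power_zero_numeral zero_less_power2 diff_self) 
      define t where "t = min 1 (inner (z - p) (w - p) / q)"
      have t0: "0 < t" "t \<le> 1" unfolding t_def using pos q0 by auto
      have tq: "t * q \<le> inner (z - p) (w - p)"
      proof -
        have "t \<le> inner (z - p) (w - p) / q" unfolding t_def by simp
        thus ?thesis using q0 by (simp add: le_divide_eq)
      qed
      have inS: "(1 - t) *\<^sub>R p + t *\<^sub>R w \<in> S" using cv pS wS t0 unfolding convex_def by simp
      have eq: "norm (z - ((1 - t) *\<^sub>R p + t *\<^sub>R w))^2 = norm (z - p)^2 - 2 * t * inner (z - p) (w - p) + t^2 * q"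
        unfolding q_def power2_norm_eq_inner by (simp add: inner_diff_left inner_diff_right inner_add_left inner_add_right inner_commute algebra_simps power2_eq_square)
      have "t^2 * q \<le> t * inner (z - p) (w - p)" using tq t0 by (simp add: power2_eq_square mult.assoc mult_left_mono)
      hence "norm (z - ((1 - t) *\<^sub>R p + t *\<^sub>R w))^2 < norm (z - p)^2" using eq t0 pos
        using mult_pos_pos[OF t0(1) pos] by linarith
      moreover have "norm (z - p) \<le> norm (z - ((1 - t) *\<^sub>R p + t *\<^sub>R w))"
        using dle[OF inS] pd by (simp add: dist_norm)
      hence "norm (z - p)^2 \<le> norm (z - ((1 - t) *\<^sub>R p + t *\<^sub>R w))^2" by (rule power_mono) simp
      ultimately show False by linarith
    qed
  qed
qed

locale qz =
  fixes P :: "'a::{real_inner,complete_space} measure" and r :: real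
  assumes prob: "prob_space P" and radon: "radon_measure P" and r_pos: "0 < r"
    and moment: "integrable P (\<lambda>x. norm x powr r)"
begin

lemma sets_P: "sets P = sets borel" using radon unfolding radon_measure_def by simp
lemma space_P: "space P = UNIV" using sets_eq_imp_space_eq[OF sets_P] by simp
lemma meas: "f \<in> borel_measurable borel \<Longrightarrow> f \<in> borel_measurable P"
  using measurable_cong_sets[OF sets_P refl] by blast
lemma sets_P': "A \<in> sets borel \<Longrightarrow> A \<in> sets P" using sets_P by simp

lemma finP: "finite_measure P" using prob by (simp add: prob_space_def)

lemma int_const: "integrable P (\<lambda>x. c::real)"
  using finite_measure.integrable_const[OF finP] .

lemma pow_bound: "norm (x - y) powr r \<le> 2 powr r * (norm x powr r + norm y powr r)"
proof -
  have "norm (x - y) \<le> norm x + norm y" by (rule norm_triangle_ineq4)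
  also have "\<dots> \<le> 2 * max (norm x) (norm y)" by simp
  finally have "norm (x - y) powr r \<le> (2 * max (norm x) (norm y)) powr r"
    using r_pos by (intro powr_mono2) auto
  also have "\<dots> = 2 powr r * max (norm x) (norm y) powr r" by (simp add: powr_mult)
  also have "max (norm x) (norm y) powr r \<le> norm x powr r + norm y powr r"
    by (simp add: max_def)
  finally show ?thesis by (simp add: mult_left_mono)
qed

lemma cont_pow: "continuous_on UNIV (\<lambda>x. norm (x - y) powr r)"
  using r_pos by (intro continuous_on_powr' continuous_intros) auto

lemma meas_pow: "(\<lambda>x. norm (x - y) powr r) \<in> borel_measurable P"
  by (intro meas borel_measurable_continuous_onI cont_pow)

lemma int_pow: "integrable P (\<lambda>x. norm (x - y) powr r)"
proof (rule Bochner_Integration.integrable_bound[where f="\<lambda>x. 2 powr r * (norm x powr r + norm y powr r)"])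
  show "integrable P (\<lambda>x. 2 powr r * (norm x powr r + norm y powr r))"
    using moment int_const by (intro integrable_mult_right integrable_add) auto
  show "(\<lambda>x. norm (x - y) powr r) \<in> borel_measurable P" by (rule meas_pow)
  show "AE x in P. norm (norm (x - y) powr r) \<le> norm (2 powr r * (norm x powr r + norm y powr r))"
    using pow_bound by auto
qed

lemma int_min: fixes b :: "nat \<Rightarrow> 'a" assumes "1 \<le> n" shows "integrable P (\<lambda>x. MIN i\<in>{..<n}. norm (x - b i) powr r)"
proof (rule Bochner_Integration.integrable_bound[OF int_pow[of "b 0"]])
  show "(\<lambda>x. MIN i\<in>{..<n}. norm (x - b i) powr r) \<in> borel_measurable P"
    by (intro borel_measurable_Min meas_pow) auto
  have "(MIN i\<in>{..<n}. norm (x - b i) powr r) \<le> norm (x - b 0) powr r" for x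
    using assms by (intro Min_le) auto
  moreover have "0 \<le> (MIN i\<in>{..<n}. norm (x - b i) powr r)" for x
    using assms by (subst Min_ge_iff) (auto simp: lessThan_empty_iff)
  ultimately show "AE x in P. norm (MIN i\<in>{..<n}. norm (x - b i) powr r) \<le> norm (norm (x - b 0) powr r)"
    by auto
qed

definition K where "K = measure_support P"

lemma notK: "x \<notin> K \<Longrightarrow> \<exists>U. open U \<and> x \<in> U \<and> emeasure P U = 0"
  unfolding K_def measure_support_def by (auto simp: not_less)

lemma inK_pos: "x \<in> K \<Longrightarrow> open U \<Longrightarrow> x \<in> U \<Longrightarrow> emeasure P U > 0"
  unfolding K_def measure_support_def by auto

lemma open_cK: "open (- K)"
proof (rule open_subopen[THEN iffD2], rule ballI)
  fix x assume "x \<in> - K"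
  then obtain U where U: "open U" "x \<in> U" "emeasure P U = 0" using notK by auto
  have "U \<subseteq> - K"
  proof
    fix y assume "y \<in> U"
    show "y \<in> - K"
    proof
      assume "y \<in> K"
      from inK_pos[OF this U(1) \<open>y \<in> U\<close>] U(3) show False by simp
    qed
  qed
  thus "\<exists>T. open T \<and> x \<in> T \<and> T \<subseteq> - K" using U by blast
qed

lemma closed_K: "closed K" using open_cK by (simp add: closed_open)

lemma null_cK: "emeasure P (- K) = 0"
proof -
  have "emeasure P Q = 0" if Q: "compact Q" "Q \<subseteq> - K" for Q
  proof -
    have "\<forall>x\<in>Q. \<exists>U. open U \<and> x \<in> U \<and> emeasure P U = 0" using notK Q by auto
    then obtain U where U: "\<And>x. x \<in> Q \<Longrightarrow> open (U x) \<and> x \<in> U x \<and> emeasure P (U x) = 0" by metis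
    obtain C where C: "C \<subseteq> Q" "finite C" "Q \<subseteq> (\<Union>c\<in>C. U c)"
      using compactE_image[OF Q(1), of Q U] U by blast
    have "emeasure P Q \<le> emeasure P (\<Union>c\<in>C. U c)"
      using C U by (intro emeasure_mono) (auto intro!: sets_P' borel_open)
    also have "\<dots> \<le> (\<Sum>c\<in>C. emeasure P (U c))"
      using C U by (intro emeasure_subadditive_finite) (auto intro!: sets_P' borel_open)
    also have "\<dots> = 0" using C U by (auto intro!: sum.neutral)
    finally show ?thesis by simp
  qed
  note Q0 = this
  moreover have "- K \<in> sets borel" using open_cK by auto
  ultimately have "emeasure P (- K) = (SUP Q\<in>{Q. compact Q \<and> Q \<subseteq> - K}. emeasure P Q)"
    using radon unfolding radon_measure_def by blast
  also have "\<dots> = (SUP Q\<in>{Q. compact Q \<and> Q \<subseteq> - K}. 0)"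
    using Q0 by (intro SUP_cong) auto
  also have "\<dots> = 0" by (rule SUP_const) auto
  finally show ?thesis .
qed

lemma AE_K: "AE x in P. x \<in> K"
proof (rule AE_I'[of "- K"])
  have "- K \<in> sets P" using open_cK by (intro sets_P' borel_open)
  thus "- K \<in> null_sets P" using null_cK by (simp add: null_sets_def)
qed auto

end

lemma Min_le_Min_ex:
  fixes f g :: "nat \<Rightarrow> real"
  assumes "finite I" "I \<noteq> {}" "\<And>j. j \<in> I \<Longrightarrow> \<exists>k\<in>I. f k \<le> g j"
  shows "(MIN k\<in>I. f k) \<le> (MIN j\<in>I. g j)"
proof -
  have "(MIN j\<in>I. g j) \<in> g ` I" using assms by (intro Min_in) auto
  then obtain j where j: "j \<in> I" "(MIN j\<in>I. g j) = g j" by auto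
  obtain k where k: "k \<in> I" "f k \<le> g j" using assms(3)[OF j(1)] by auto
  have "(MIN k\<in>I. f k) \<le> f k" using k assms by (intro Min_le) auto
  thus ?thesis using k j by simp
qed

lemma powr_conv:
  fixes p a b u :: real
  assumes p: "1 \<le> p" and ab: "0 \<le> a" "0 \<le> b" and u: "0 \<le> u" "u \<le> 1"
  shows "((1 - u) * a + u * b) powr p \<le> (1 - u) * a powr p + u * b powr p"
proof (cases "a > 0 \<and> b > 0")
  case True
  have "((1 - u) *\<^sub>R a + u *\<^sub>R b) powr p \<le> (1 - u) * a powr p + u * b powr p"
    using convex_onD[OF powr_convex[OF p], of u a b] True u by auto
  thus ?thesis by simp
next
  case False
  have p0: "p \<noteq> 0" using p by auto
  have upow: "v powr p \<le> v" if "0 \<le> v" "v \<le> 1" for v :: real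
    using powr_mono'[OF p that] that by simp
  show ?thesis
  proof (cases "a = 0")
    case True
    have "(u * b) powr p = u powr p * b powr p" using u ab by (simp add: powr_mult)
    also have "\<dots> \<le> u * b powr p" using upow[OF u] by (simp add: mult_right_mono)
    finally show ?thesis using True p0 by simp
  next
    case False
    hence b0: "b = 0" using \<open>\<not> (a > 0 \<and> b > 0)\<close> ab by auto
    have "((1 - u) * a) powr p = (1 - u) powr p * a powr p" using u ab by (simp add: powr_mult)
    also have "\<dots> \<le> (1 - u) * a powr p" using upow[of "1 - u"] u by (simp add: mult_right_mono)
    finally show ?thesis using b0 p0 by simp
  qed
qed

lemma norm_powr_convex:
  fixes x y1 y2 :: "'a::real_normed_vector"
  assumes "1 \<le> p" "0 \<le> u" "u \<le> 1"
  shows "norm (x - ((1 - u) *\<^sub>R y1 + u *\<^sub>R y2)) powr p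
     \<le> (1 - u) * norm (x - y1) powr p + u * norm (x - y2) powr p"
proof -
  have "x - ((1 - u) *\<^sub>R y1 + u *\<^sub>R y2) = (1 - u) *\<^sub>R (x - y1) + u *\<^sub>R (x - y2)"
    by (simp add: algebra_simps)
  hence "norm (x - ((1 - u) *\<^sub>R y1 + u *\<^sub>R y2)) \<le> norm ((1 - u) *\<^sub>R (x - y1)) + norm (u *\<^sub>R (x - y2))"
    using norm_triangle_ineq[of "(1 - u) *\<^sub>R (x - y1)" "u *\<^sub>R (x - y2)"] by simp
  also have "\<dots> = (1 - u) * norm (x - y1) + u * norm (x - y2)" using assms by simp
  finally have "norm (x - ((1 - u) *\<^sub>R y1 + u *\<^sub>R y2)) \<le> (1 - u) * norm (x - y1) + u * norm (x - y2)" .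
  hence "norm (x - ((1 - u) *\<^sub>R y1 + u *\<^sub>R y2)) powr p \<le> ((1 - u) * norm (x - y1) + u * norm (x - y2)) powr p"
    using assms by (intro powr_mono2) auto
  also have "\<dots> \<le> (1 - u) * norm (x - y1) powr p + u * norm (x - y2) powr p"
    using assms by (intro powr_conv) auto
  finally show ?thesis .
qed

lemma norm_diff_scale_sq:
  fixes v w :: "'a::real_inner"
  shows "norm (v - t *\<^sub>R w)^2 = norm v^2 - 2 * t * inner v w + t^2 * norm w^2"
proof -
  have "inner (v - t *\<^sub>R w) (v - t *\<^sub>R w) = inner v v - t * inner w v - t * inner v w + t * t * inner w w"
    by (simp add: inner_diff_left inner_diff_right right_diff_distrib)
  thus ?thesis unfolding power2_norm_eq_inner by (simp add: inner_commute power2_eq_square)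
qed

lemma proj_step:
  fixes a p x :: "'a::real_inner"
  assumes var: "inner (a - p) (x - p) \<le> 0" and t: "0 \<le> t" "t \<le> 1"
  shows "norm (x - (a + t *\<^sub>R (p - a))) \<le> norm (x - a)"
proof -
  have e1: "norm (x - (a + t *\<^sub>R (p - a)))^2 = norm (x - a)^2 - 2 * t * inner (x - a) (p - a) + t^2 * norm (p - a)^2"
  proof -
    have "x - (a + t *\<^sub>R (p - a)) = (x - a) - t *\<^sub>R (p - a)" by simp
    thus ?thesis by (simp only: norm_diff_scale_sq)
  qed
  have e2: "inner (x - a) (p - a) = - inner (a - p) (x - p) + norm (p - a)^2"
    unfolding power2_norm_eq_inner by (simp add: inner_diff_left inner_diff_right inner_commute algebra_simps)
  have "t * t \<le> t * 1" using t by (intro mult_left_mono) auto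
  hence "t^2 \<le> 2 * t" using t unfolding power2_eq_square by linarith
  hence "t^2 * norm (p - a)^2 \<le> 2 * t * norm (p - a)^2" by (intro mult_right_mono) auto
  moreover have "0 \<le> t * inner (a - p) (x - p) * (-1)" using var t by (simp add: mult_nonneg_nonpos)
  moreover have "2 * t * inner (x - a) (p - a) = 2 * t * norm (p - a)^2 - 2 * (t * inner (a - p) (x - p))"
    unfolding e2 by (simp add: right_diff_distrib distrib_left)
  ultimately have "norm (x - (a + t *\<^sub>R (p - a)))^2 \<le> norm (x - a)^2"
    unfolding e1 by linarith
  thus ?thesis by (rule power2_le_imp_le) simp
qed

context qz begin

definition Fc :: "'a set \<Rightarrow> 'a \<Rightarrow> real" where
  "Fc C y = (\<integral>x. indicator C x * norm (x - y) powr r \<partial>P)"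

lemma int_ind: "C \<in> sets borel \<Longrightarrow> integrable P f \<Longrightarrow> integrable P (\<lambda>x. indicator C x * f x :: real)"
  using integrable_real_mult_indicator[OF sets_P', of C f] by (simp add: mult.commute)

lemma int_ind_pow: "C \<in> sets borel \<Longrightarrow> integrable P (\<lambda>x. indicator C x * norm (x - y) powr r)"
  by (intro int_ind int_pow)

lemma K_ne: "K \<noteq> {}"
proof
  assume "K = {}"
  hence "emeasure P UNIV = 0" using null_cK by simp
  moreover have "emeasure P UNIV = 1" using prob_space.emeasure_space_1[OF prob] space_P by simp
  ultimately show False by simp
qed

lemma Fc_convex:
  assumes r1: "1 \<le> r" and C: "C \<in> sets borel" and u: "0 \<le> u" "u \<le> 1"
  shows "Fc C ((1 - u) *\<^sub>R y1 + u *\<^sub>R y2) \<le> (1 - u) * Fc C y1 + u * Fc C y2"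
proof -
  have "Fc C ((1 - u) *\<^sub>R y1 + u *\<^sub>R y2) \<le>
     (\<integral>x. (1 - u) * (indicator C x * norm (x - y1) powr r) + u * (indicator C x * norm (x - y2) powr r) \<partial>P)"
    unfolding Fc_def
  proof (rule integral_mono)
    show "integrable P (\<lambda>x. indicator C x * norm (x - ((1 - u) *\<^sub>R y1 + u *\<^sub>R y2)) powr r)"
      by (rule int_ind_pow[OF C])
    show "integrable P (\<lambda>x. (1 - u) * (indicator C x * norm (x - y1) powr r) + u * (indicator C x * norm (x - y2) powr r))"
      using int_ind_pow[OF C, of y1] int_ind_pow[OF C, of y2] by simp
    fix x
    show "indicator C x * norm (x - ((1 - u) *\<^sub>R y1 + u *\<^sub>R y2)) powr r
      \<le> (1 - u) * (indicator C x * norm (x - y1) powr r) + u * (indicator C x * norm (x - y2) powr r)"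
      using norm_powr_convex[OF r1 u, of x y1 y2] by (cases "x \<in> C") auto
  qed
  also have "\<dots> = (1 - u) * Fc C y1 + u * Fc C y2"
    unfolding Fc_def using int_ind_pow[OF C] by (simp add: integral_add)
  finally show ?thesis .
qed

lemma local_to_global:
  assumes r1: "1 \<le> r" and C: "C \<in> sets borel" and e: "e > 0"
    and loc: "\<And>y. dist y c < e \<Longrightarrow> y \<noteq> c \<Longrightarrow> Fc C y > Fc C c"
  shows "Fc C c \<le> Fc C y"
proof (rule ccontr)
  assume "\<not> ?thesis" hence lt: "Fc C y < Fc C c" by simp
  hence yc: "y \<noteq> c" by auto
  define s where "s = min (1/2) (e / (2 * norm (y - c)))"
  have nyc: "norm (y - c) > 0" using yc by simp
  have s0: "0 < s" "s \<le> 1" unfolding s_def using e nyc by auto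
  define z where "z = (1 - s) *\<^sub>R c + s *\<^sub>R y"
  have zc: "z - c = s *\<^sub>R (y - c)" unfolding z_def by (simp add: algebra_simps)
  have "dist z c = s * norm (y - c)" unfolding dist_norm zc using s0 by simp
  also have "\<dots> \<le> e / (2 * norm (y - c)) * norm (y - c)" unfolding s_def
    by (intro mult_right_mono) auto
  also have "\<dots> = e / 2" using nyc by simp
  finally have dz: "dist z c < e" using e by simp
  have "z \<noteq> c" using zc s0 yc by auto
  hence "Fc C z > Fc C c" using loc dz by blast
  moreover have "Fc C z \<le> (1 - s) * Fc C c + s * Fc C y" unfolding z_def
    using Fc_convex[OF r1 C, of s c y] s0 by simp
  moreover have "s * Fc C y < s * Fc C c" using lt s0 by simp
  ultimately show False by (simp add: algebra_simps)
qed

end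

locale qzm = qz +
  fixes n :: nat and a :: "nat \<Rightarrow> 'a"
  assumes n_pos: "1 \<le> n" and convK: "convex (measure_support P)"
    and smin: "strict_local_min n (distortion P r n) a"
begin

lemma convex_K: "convex K" using convK unfolding K_def .

lemma smin_e: obtains e where "e > 0"
  "\<And>b. (\<forall>i<n. dist (b i) (a i) < e) \<Longrightarrow> (\<exists>i<n. b i \<noteq> a i) \<Longrightarrow> distortion P r n b > distortion P r n a"
  using smin unfolding strict_local_min_def by blast

lemma part1: assumes i: "i < n" shows "a i \<in> K"
proof (rule ccontr)
  assume aK: "a i \<notin> K"
  obtain p where pK: "p \<in> K" and pv: "\<And>w. w \<in> K \<Longrightarrow> inner (a i - p) (w - p) \<le> 0"
    using proj_exists[OF closed_K convex_K K_ne, of "a i"] by blast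
  have pa: "p \<noteq> a i" using pK aK by auto
  hence np: "norm (p - a i) > 0" by simp
  obtain e where e: "e > 0" and emin:
    "\<And>b. (\<forall>i<n. dist (b i) (a i) < e) \<Longrightarrow> (\<exists>i<n. b i \<noteq> a i) \<Longrightarrow> distortion P r n b > distortion P r n a"
    using smin_e by blast
  define t where "t = min 1 (e / (2 * norm (p - a i)))"
  have t0: "0 < t" "t \<le> 1" unfolding t_def using e np by auto
  define b where "b = a(i := a i + t *\<^sub>R (p - a i))"
  have "dist (b i) (a i) = t * norm (p - a i)" unfolding b_def dist_norm using t0 by simp
  also have "\<dots> \<le> e / (2 * norm (p - a i)) * norm (p - a i)" unfolding t_def
    by (intro mult_right_mono) auto
  also have "\<dots> = e / 2" using np by simp
  finally have "dist (b i) (a i) < e" using e by simp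
  hence d: "\<forall>j<n. dist (b j) (a j) < e" unfolding b_def using e by auto
  have "b i \<noteq> a i" unfolding b_def using t0 pa by simp
  hence "\<exists>j<n. b j \<noteq> a j" using i by blast
  hence gt: "distortion P r n b > distortion P r n a" using emin d by blast
  have pw: "(MIN j\<in>{..<n}. norm (x - b j) powr r) \<le> (MIN j\<in>{..<n}. norm (x - a j) powr r)"
    if xK: "x \<in> K" for x
  proof (rule Min_le_Min_ex)
    show "finite {..<n}" by simp
    show "{..<n} \<noteq> {}" using n_pos by (simp add: lessThan_empty_iff)
    fix j assume j: "j \<in> {..<n}"
    show "\<exists>k\<in>{..<n}. norm (x - b k) powr r \<le> norm (x - a j) powr r"
    proof (intro bexI[OF _ j])
      show "norm (x - b j) powr r \<le> norm (x - a j) powr r"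
      proof (cases "j = i")
        case True
        have "norm (x - b j) \<le> norm (x - a j)" unfolding b_def True
          using proj_step[OF pv[OF xK] less_imp_le[OF t0(1)] t0(2)] by simp
        thus ?thesis using r_pos by (intro powr_mono2) auto
      next
        case False thus ?thesis unfolding b_def by simp
      qed
    qed
  qed
  have "distortion P r n b \<le> distortion P r n a" unfolding distortion_def
  proof (rule integral_mono_AE[OF int_min[OF n_pos] int_min[OF n_pos]])
    show "AE x in P. (MIN j\<in>{..<n}. norm (x - b j) powr r) \<le> (MIN j\<in>{..<n}. norm (x - a j) powr r)"
      using AE_K by eventually_elim (rule pw)
  qed
  thus False using gt by simp
qed

end

lemma open_W: "finite G \<Longrightarrow> open (voronoi_W b G)"
proof -
  assume G: "finite G"
  have "voronoi_W b G = (\<Inter>c\<in>G - {b}. {x. norm (x - b) < norm (x - c)})"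
    unfolding voronoi_W_def by auto
  also have "open \<dots>" using G by (intro open_INT ballI open_Collect_less continuous_intros) auto
  finally show ?thesis .
qed

lemma closed_V: "closed (voronoi_V b G)"
proof -
  have "voronoi_V b G = (\<Inter>c\<in>G. {x. norm (x - b) \<le> norm (x - c)})"
    unfolding voronoi_V_def by auto
  also have "closed \<dots>" by (intro closed_INT ballI closed_Collect_le continuous_intros)
  finally show ?thesis .
qed

lemma W_sub_V: "voronoi_W b G \<subseteq> voronoi_V b G"
  unfolding voronoi_W_def voronoi_V_def by (auto intro: less_imp_le)

lemma ball_W: assumes G: "finite G" shows "\<exists>d>0. ball b d \<subseteq> voronoi_W b G"
proof -
  obtain d where d: "d > 0" "\<And>x. x \<in> G \<Longrightarrow> x \<noteq> b \<Longrightarrow> d \<le> dist b x"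
    using finite_set_avoid[OF G, of b] by blast
  have "ball b (d/2) \<subseteq> voronoi_W b G"
  proof
    fix x assume x: "x \<in> ball b (d/2)"
    hence xb: "norm (x - b) < d/2" by (simp add: dist_norm norm_minus_commute)
    show "x \<in> voronoi_W b G" unfolding voronoi_W_def
    proof (intro CollectI ballI)
      fix c assume "c \<in> G - {b}"
      hence c: "c \<in> G" "c \<noteq> b" by auto
      have "d \<le> norm (b - c)" using d(2)[of c] c by (simp add: dist_norm)
      also have "norm (b - c) \<le> norm (x - b) + norm (x - c)"
        using norm_triangle_ineq4[of "x - c" "x - b"] by (simp add: norm_minus_commute)
      finally show "norm (x - b) < norm (x - c)" using xb by linarith
    qed
  qed
  thus ?thesis using d(1) by (intro exI[of _ "d/2"]) auto
qed

context qzm begin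

lemma Min_at_V:
  assumes i: "i < n" and x: "x \<in> voronoi_V (a i) (a ` {..<n})"
  shows "(MIN j\<in>{..<n}. norm (x - a j) powr r) = norm (x - a i) powr r"
proof (rule antisym)
  show "(MIN j\<in>{..<n}. norm (x - a j) powr r) \<le> norm (x - a i) powr r" using i by (intro Min_le) auto
  have "norm (x - a i) powr r \<le> norm (x - a j) powr r" if "j < n" for j
  proof -
    have "norm (x - a i) \<le> norm (x - a j)" using x that unfolding voronoi_V_def by auto
    thus ?thesis using r_pos by (intro powr_mono2) auto
  qed
  thus "norm (x - a i) powr r \<le> (MIN j\<in>{..<n}. norm (x - a j) powr r)"
    using n_pos by (subst Min_ge_iff) (auto simp: lessThan_empty_iff)
qed

lemma local_cmp:
  assumes i: "i < n" and C: "C \<in> sets borel"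
    and WC: "voronoi_W (a i) (a ` {..<n}) \<subseteq> C" and CV: "C \<subseteq> voronoi_V (a i) (a ` {..<n})"
  shows "distortion P r n (a(i := y)) \<le> Fc C y + distortion P r n a - Fc C (a i)"
proof -
  define b where "b = a(i := y)"
  define ma where "ma x = (MIN j\<in>{..<n}. norm (x - a j) powr r)" for x
  define mb where "mb x = (MIN j\<in>{..<n}. norm (x - b j) powr r)" for x
  have ne: "{..<n} \<noteq> {}" using n_pos by (simp add: lessThan_empty_iff)
  have pw: "mb x \<le> indicator C x * norm (x - y) powr r + (ma x - indicator C x * ma x)" for x
  proof (cases "x \<in> C")
    case True
    have "mb x \<le> norm (x - b i) powr r" unfolding mb_def using i by (intro Min_le) auto
    thus ?thesis using True unfolding b_def by simp
  next
    case False
    hence "x \<notin> voronoi_W (a i) (a ` {..<n})" using WC by auto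
    then obtain k where k: "k < n" "a k \<noteq> a i" "norm (x - a k) \<le> norm (x - a i)"
      unfolding voronoi_W_def by (auto simp: not_less)
    have "mb x \<le> ma x" unfolding mb_def ma_def
    proof (rule Min_le_Min_ex[OF _ ne])
      fix j assume j: "j \<in> {..<n}"
      show "\<exists>k\<in>{..<n}. norm (x - b k) powr r \<le> norm (x - a j) powr r"
      proof (cases "j = i")
        case True
        have "k \<noteq> i" using k by auto
        hence "norm (x - b k) powr r \<le> norm (x - a j) powr r"
          unfolding b_def True using k r_pos by (simp add: powr_mono2)
        thus ?thesis using k by auto
      next
        case False thus ?thesis using j unfolding b_def by (intro bexI[OF _ j]) simp
      qed
    qed simp
    thus ?thesis using False by simp
  qed
  have ima: "integrable P ma" unfolding ma_def by (rule int_min[OF n_pos])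
  have imb: "integrable P mb" unfolding mb_def by (rule int_min[OF n_pos])
  have iind: "integrable P (\<lambda>x. indicator C x * ma x)" by (rule int_ind[OF C ima])
  have "(\<integral>x. mb x \<partial>P) \<le> (\<integral>x. indicator C x * norm (x - y) powr r + (ma x - indicator C x * ma x) \<partial>P)"
    using pw imb ima iind int_ind_pow[OF C, of y] by (intro integral_mono) auto
  also have "\<dots> = Fc C y + ((\<integral>x. ma x \<partial>P) - (\<integral>x. indicator C x * ma x \<partial>P))"
    unfolding Fc_def using ima iind int_ind_pow[OF C, of y] by (simp add: integral_add integral_diff)
  also have "(\<integral>x. indicator C x * ma x \<partial>P) = Fc C (a i)"
    unfolding Fc_def
  proof (rule Bochner_Integration.integral_cong[OF refl])
    fix x show "indicator C x * ma x = indicator C x * norm (x - a i) powr r"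
      using Min_at_V[OF i, of x] CV unfolding ma_def by (cases "x \<in> C") auto
  qed
  finally show ?thesis unfolding distortion_def ma_def mb_def b_def by simp
qed

lemma F_local:
  assumes i: "i < n" and C: "C \<in> sets borel"
    and WC: "voronoi_W (a i) (a ` {..<n}) \<subseteq> C" and CV: "C \<subseteq> voronoi_V (a i) (a ` {..<n})"
  obtains e where "e > 0" "\<And>y. dist y (a i) < e \<Longrightarrow> y \<noteq> a i \<Longrightarrow> Fc C y > Fc C (a i)"
proof -
  obtain e where e: "e > 0" and emin:
    "\<And>b. (\<forall>i<n. dist (b i) (a i) < e) \<Longrightarrow> (\<exists>i<n. b i \<noteq> a i) \<Longrightarrow> distortion P r n b > distortion P r n a"
    using smin_e by blast
  have "Fc C y > Fc C (a i)" if "dist y (a i) < e" "y \<noteq> a i" for y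
  proof -
    have "\<forall>j<n. dist ((a(i := y)) j) (a j) < e" using that e by auto
    moreover have "\<exists>j<n. (a(i := y)) j \<noteq> a j" using that i by (intro exI[of _ i]) auto
    ultimately have "distortion P r n (a(i := y)) > distortion P r n a" by (rule emin)
    thus ?thesis using local_cmp[OF i C WC CV, of y] by simp
  qed
  thus ?thesis using e that by blast
qed

lemma F_global:
  assumes r1: "1 \<le> r" and i: "i < n" and C: "C \<in> sets borel"
    and WC: "voronoi_W (a i) (a ` {..<n}) \<subseteq> C" and CV: "C \<subseteq> voronoi_V (a i) (a ` {..<n})"
  shows "Fc C (a i) \<le> Fc C y"
proof -
  obtain e where "e > 0" "\<And>y. dist y (a i) < e \<Longrightarrow> y \<noteq> a i \<Longrightarrow> Fc C y > Fc C (a i)"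
    using F_local[OF i C WC CV] by blast
  thus ?thesis using local_to_global[OF r1 C] by blast
qed

lemma W_pos: assumes i: "i < n" shows "emeasure P (voronoi_W (a i) (a ` {..<n})) > 0"
proof -
  obtain d where d: "d > 0" "ball (a i) d \<subseteq> voronoi_W (a i) (a ` {..<n})"
    using ball_W[of "a ` {..<n}" "a i"] by auto
  have "0 < emeasure P (ball (a i) d)" using part1[OF i] d(1) by (intro inK_pos) auto
  also have "\<dots> \<le> emeasure P (voronoi_W (a i) (a ` {..<n}))"
    using d(2) by (intro emeasure_mono sets_P' borel_open open_W) auto
  finally show ?thesis .
qed

lemma inj_a:
  assumes v: "v \<noteq> (0::'a)" shows "inj_on a {..<n}"
proof (rule inj_onI, rule ccontr)
  fix i j assume i: "i \<in> {..<n}" and j: "j \<in> {..<n}" and eq: "a i = a j" and ij: "i \<noteq> j"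
  obtain e where e: "e > 0" and emin:
    "\<And>b. (\<forall>i<n. dist (b i) (a i) < e) \<Longrightarrow> (\<exists>i<n. b i \<noteq> a i) \<Longrightarrow> distortion P r n b > distortion P r n a"
    using smin_e by blast
  define w where "w = (e / (2 * norm v)) *\<^sub>R v"
  have nv: "norm v > 0" using v by simp
  have nw: "norm w = e / 2" unfolding w_def using nv e by simp
  define b where "b = a(j := a j + w)"
  have "\<forall>l<n. dist (b l) (a l) < e" unfolding b_def using nw e by (auto simp: dist_norm)
  moreover have "\<exists>l<n. b l \<noteq> a l" using j nw e unfolding b_def by (intro exI[of _ j]) auto
  ultimately have gt: "distortion P r n b > distortion P r n a" by (rule emin)
  have ne: "{..<n} \<noteq> {}" using n_pos by (simp add: lessThan_empty_iff)
  have "(MIN l\<in>{..<n}. norm (x - b l) powr r) \<le> (MIN l\<in>{..<n}. norm (x - a l) powr r)" for x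
  proof (rule Min_le_Min_ex[OF _ ne])
    fix l assume l: "l \<in> {..<n}"
    show "\<exists>k\<in>{..<n}. norm (x - b k) powr r \<le> norm (x - a l) powr r"
    proof (cases "l = j")
      case True
      have "b i = a l" unfolding b_def using ij eq True by simp
      thus ?thesis using i by (intro bexI[OF _ i]) simp
    next
      case False thus ?thesis using l unfolding b_def by (intro bexI[OF _ l]) simp
    qed
  qed simp
  hence "distortion P r n b \<le> distortion P r n a" unfolding distortion_def
    by (intro integral_mono int_min[OF n_pos])
  thus False using gt by simp
qed

end

lemma quot_bounds:
  fixes h :: "real \<Rightarrow> real"
  assumes conv: "\<And>s1 s2 v. 0 \<le> v \<Longrightarrow> v \<le> 1 \<Longrightarrow> h ((1 - v) * s1 + v * s2) \<le> (1 - v) * h s1 + v * h s2"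
    and t: "0 < t" "t \<le> 1"
  shows "h 0 - h (-1) \<le> (h t - h 0) / t" "(h t - h 0) / t \<le> h 1 - h 0"
proof -
  have "h ((1 - t) * 0 + t * 1) \<le> (1 - t) * h 0 + t * h 1" using t by (intro conv) auto
  hence "h t - h 0 \<le> t * (h 1 - h 0)" by (simp add: algebra_simps)
  thus "(h t - h 0) / t \<le> h 1 - h 0" using t by (simp add: pos_divide_le_eq mult.commute)
  define s where "s = 1 / (1 + t)"
  have s: "0 \<le> s" "s \<le> 1" unfolding s_def using t by auto
  have "(1 - s) * (-1) + s * t = 0" unfolding s_def using t by (simp add: field_simps)
  hence "h 0 \<le> (1 - s) * h (-1) + s * h t" using conv[OF s, of "-1" t] by simp
  hence "(1 + t) * h 0 \<le> (1 + t) * ((1 - s) * h (-1) + s * h t)" using t by (intro mult_left_mono) auto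
  also have "(1 + t) * ((1 - s) * h (-1) + s * h t) = t * h (-1) + h t"
  proof -
    have t1: "1 + t \<noteq> 0" using t by simp
    have "1 - s = t / (1 + t)" unfolding s_def using t1 by (simp add: field_simps)
    thus ?thesis unfolding s_def using t1 by (simp add: distrib_left)
  qed
  finally have "t * (h 0 - h (-1)) \<le> h t - h 0" by (simp add: algebra_simps)
  thus "h 0 - h (-1) \<le> (h t - h 0) / t" using t by (simp add: pos_le_divide_eq mult.commute)
qed

lemma h_conv:
  fixes x c u :: "'a::real_normed_vector"
  assumes "1 \<le> r" "0 \<le> v" "v \<le> 1"
  shows "norm (x - (c + ((1 - v) * s1 + v * s2) *\<^sub>R u)) powr r
    \<le> (1 - v) * norm (x - (c + s1 *\<^sub>R u)) powr r + v * norm (x - (c + s2 *\<^sub>R u)) powr r"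
proof -
  have "c + ((1 - v) * s1 + v * s2) *\<^sub>R u = (1 - v) *\<^sub>R (c + s1 *\<^sub>R u) + v *\<^sub>R (c + s2 *\<^sub>R u)"
    by (simp add: algebra_simps scaleR_add_left)
  thus ?thesis using norm_powr_convex[OF assms, of x "c + s1 *\<^sub>R u" "c + s2 *\<^sub>R u"] by simp
qed

lemma h_deriv:
  fixes x c u :: "'a::real_inner"
  assumes xc: "x \<noteq> c"
  shows "((\<lambda>t. norm (x - (c + t *\<^sub>R u)) powr r) has_real_derivative
     (r * (norm (x - c) powr (r - 1) * (inner (c - x) u / norm (c - x))))) (at 0)"
proof -
  define v where "v = x - c"
  have v0: "v \<noteq> 0" using xc unfolding v_def by simp
  have d1: "((\<lambda>t. x - (c + t *\<^sub>R u)) has_derivative (\<lambda>t. - (t *\<^sub>R u))) (at 0)"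
    by (auto intro!: derivative_eq_intros)
  have d2: "(norm has_derivative (\<lambda>h. inner h (sgn v))) (at ((\<lambda>t. x - (c + t *\<^sub>R u)) 0))"
    using has_derivative_norm[OF v0] unfolding v_def by simp
  have d3: "((\<lambda>t. norm (x - (c + t *\<^sub>R u))) has_derivative (\<lambda>t. inner (- (t *\<^sub>R u)) (sgn v))) (at 0)"
    using has_derivative_compose[OF d1 d2] by simp
  have eqf: "(\<lambda>t. inner (- (t *\<^sub>R u)) (sgn v)) = (*) (- inner u (sgn v))"
    by (rule ext) simp
  have "((\<lambda>t. norm (x - (c + t *\<^sub>R u))) has_real_derivative (- inner u (sgn v))) (at 0)"
    unfolding has_field_derivative_def using d3 unfolding eqf .
  from DERIV_fun_powr[OF this, of r]
  have "((\<lambda>t. norm (x - (c + t *\<^sub>R u)) powr r) has_real_derivative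
      r * norm v powr (r - 1) * (- inner u (sgn v))) (at 0)"
    using v0 unfolding v_def by simp
  moreover have "r * norm v powr (r - 1) * (- inner u (sgn v)) =
      r * (norm (x - c) powr (r - 1) * (inner (c - x) u / norm (c - x)))"
  proof -
    have "- inner u (sgn v) = inner (c - x) u / norm (c - x)"
      unfolding v_def sgn_div_norm by (simp add: inner_commute norm_minus_commute inner_diff_left inner_diff_right divide_inverse algebra_simps)
    thus ?thesis unfolding v_def by simp
  qed
  ultimately show ?thesis by simp
qed

lemma seq_deriv:
  fixes f :: "real \<Rightarrow> real"
  assumes "(f has_real_derivative D) (at 0)"
  shows "(\<lambda>k. (f (inverse (real (Suc k))) - f 0) / inverse (real (Suc k))) \<longlonglongrightarrow> D"
proof -
  have l: "((\<lambda>y. (f y - f 0) / (y - 0)) \<longlongrightarrow> D) (at 0)"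
    using assms unfolding has_field_derivative_iff .
  have "filterlim (\<lambda>k. inverse (real (Suc k))) (at 0) sequentially"
    unfolding filterlim_at using LIMSEQ_inverse_real_of_nat by auto
  from filterlim_compose[OF l this] show ?thesis by simp
qed

context qz begin

lemma meas_phi:
  assumes C: "C \<in> sets borel"
  shows "(\<lambda>x. indicator (C - {c}) x * norm (x - c) powr (r - 1) * (inner (c - x) u / norm (c - x)))
     \<in> borel_measurable P"
proof -
  have m1: "(\<lambda>x. norm (x - c)) \<in> borel_measurable P"
    by (intro meas borel_measurable_continuous_onI continuous_intros)
  have m2: "(\<lambda>x. inner (c - x) u) \<in> borel_measurable P"
    by (intro meas borel_measurable_continuous_onI continuous_intros)
  have m3: "(\<lambda>x. norm (c - x)) \<in> borel_measurable P"
    by (intro meas borel_measurable_continuous_onI continuous_intros)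
  have "C - {c} \<in> sets P" using C by (intro sets_P' sets.Diff) auto
  hence mi: "indicator (C - {c}) \<in> borel_measurable P" by (rule borel_measurable_indicator)
  have m4: "(\<lambda>x. norm (x - c) powr (r - 1)) \<in> borel_measurable P"
    using m1 by (intro powr_real_measurable) auto
  show ?thesis
    by (intro borel_measurable_times borel_measurable_divide mi m2 m3 m4)
qed

lemma deriv_nonneg:
  assumes r1: "1 \<le> r" and C: "C \<in> sets borel" and atom: "r = 1 \<Longrightarrow> emeasure P {c} = 0"
    and gmin: "\<And>y. Fc C c \<le> Fc C y"
  shows "integrable P (\<lambda>x. indicator (C - {c}) x * norm (x - c) powr (r - 1) * (inner (c - x) u / norm (c - x)))
     \<and> 0 \<le> (\<integral>x. indicator (C - {c}) x * norm (x - c) powr (r - 1) * (inner (c - x) u / norm (c - x)) \<partial>P)"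
proof -
  define \<phi> where "\<phi> x = indicator (C - {c}) x * norm (x - c) powr (r - 1) * (inner (c - x) u / norm (c - x))" for x
  define h where "h x t = norm (x - (c + t *\<^sub>R u)) powr r" for x t
  define tk where "tk k = inverse (real (Suc k))" for k
  define q where "q k x = (indicator C x * h x (tk k) - indicator C x * h x 0) / tk k" for k x
  define w where "w x = \<bar>h x 1 - h x 0\<bar> + \<bar>h x 0 - h x (-1)\<bar>" for x
  have tk: "0 < tk k" "tk k \<le> 1" for k unfolding tk_def by (auto simp: field_simps)
  have hint: "integrable P (\<lambda>x. h x t)" for t unfolding h_def by (rule int_pow)
  have hiint: "integrable P (\<lambda>x. indicator C x * h x t)" for t unfolding h_def by (rule int_ind_pow[OF C])
  have h0: "h x 0 = norm (x - c) powr r" for x unfolding h_def by simp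
  have qint: "integrable P (q k)" for k unfolding q_def using hiint by simp
  have qmeas: "q k \<in> borel_measurable P" for k using qint by (rule borel_measurable_integrable)
  have qnn: "0 \<le> (\<integral>x. q k x \<partial>P)" for k
  proof -
    have "(\<integral>x. q k x \<partial>P) = ((\<integral>x. indicator C x * h x (tk k) \<partial>P) - (\<integral>x. indicator C x * h x 0 \<partial>P)) / tk k"
      unfolding q_def using hiint[of "tk k"] hiint[of 0] by (simp add: integral_diff)
    also have "\<dots> = (Fc C (c + tk k *\<^sub>R u) - Fc C c) / tk k"
      unfolding Fc_def h_def by simp
    also have "\<dots> \<ge> 0" using gmin[of "c + tk k *\<^sub>R u"] tk[of k] by simp
    finally show ?thesis .
  qed
  have wint: "integrable P w" unfolding w_def using hint by simp
  have hconv: "h x ((1 - v) * s1 + v * s2) \<le> (1 - v) * h x s1 + v * h x s2"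
    if "0 \<le> v" "v \<le> 1" for x v s1 s2 unfolding h_def by (rule h_conv[OF r1 that])
  have bound: "norm (q k x) \<le> w x" for k x
  proof (cases "x \<in> C")
    case True
    have qb: "h x 0 - h x (-1) \<le> (h x (tk k) - h x 0) / tk k" "(h x (tk k) - h x 0) / tk k \<le> h x 1 - h x 0"
      using quot_bounds[of "h x", OF hconv tk] by auto
    have "q k x = (h x (tk k) - h x 0) / tk k" unfolding q_def using True by simp
    thus ?thesis using qb unfolding w_def by auto
  next
    case False thus ?thesis unfolding q_def w_def by simp
  qed
  have ae: "AE x in P. x \<noteq> c \<or> 1 < r"
  proof (cases "r = 1")
    case True
    have "{c} \<in> null_sets P" using atom[OF True] by (simp add: null_sets_def sets_P)
    thus ?thesis by (rule AE_I') auto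
  next
    case False thus ?thesis using r1 by simp
  qed
  have lim: "AE x in P. (\<lambda>k. q k x) \<longlonglongrightarrow> r * \<phi> x"
    using ae
  proof eventually_elim
    fix x assume xa: "x \<noteq> c \<or> 1 < r"
    show "(\<lambda>k. q k x) \<longlonglongrightarrow> r * \<phi> x"
    proof (cases "x \<in> C")
      case False thus ?thesis unfolding q_def \<phi>_def by simp
    next
      case True
      have qx: "q k x = (h x (tk k) - h x 0) / tk k" for k unfolding q_def using True by simp
      show ?thesis
      proof (cases "x = c")
        case False
        have "(\<lambda>k. (h x (tk k) - h x 0) / tk k) \<longlonglongrightarrow> r * (norm (x - c) powr (r - 1) * (inner (c - x) u / norm (c - x)))"
          unfolding tk_def h_def by (rule seq_deriv[OF h_deriv[OF False]])
        thus ?thesis unfolding qx \<phi>_def using True False by simp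
      next
        case xc: True
        hence r1': "1 < r" using xa by simp
        have "q k x = tk k powr (r - 1) * norm u powr r" for k
        proof -
          have "h x (tk k) = tk k powr r * norm u powr r" unfolding h_def xc using tk[of k]
            by (simp add: powr_mult)
          moreover have "h x 0 = 0" unfolding h_def xc using r_pos by simp
          moreover have "tk k powr r / tk k = tk k powr (r - 1)" using tk[of k] by (simp add: powr_diff)
          ultimately show ?thesis unfolding qx by (simp add: mult.commute times_divide_eq_right[symmetric])
        qed
        moreover have "(\<lambda>k. tk k powr (r - 1) * norm u powr r) \<longlonglongrightarrow> 0 * norm u powr r"
        proof (intro tendsto_mult tendsto_const)
          show "(\<lambda>k. tk k powr (r - 1)) \<longlonglongrightarrow> 0"
            using r1' unfolding tk_def
            by (intro tendsto_zero_powrI LIMSEQ_inverse_real_of_nat tendsto_const) auto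
        qed
        moreover have "\<phi> x = 0" unfolding \<phi>_def xc by simp
        ultimately show ?thesis by simp
      qed
    qed
  qed
  have mphi: "(\<lambda>x. r * \<phi> x) \<in> borel_measurable P"
    unfolding \<phi>_def by (intro borel_measurable_times borel_measurable_const meas_phi[OF C])
  have iphi: "integrable P (\<lambda>x. r * \<phi> x)"
    by (rule integrable_dominated_convergence[OF mphi qmeas wint lim]) (rule AE_I2, rule bound)
  have limi: "(\<lambda>k. \<integral>x. q k x \<partial>P) \<longlonglongrightarrow> (\<integral>x. r * \<phi> x \<partial>P)"
    by (rule integral_dominated_convergence[OF mphi qmeas wint lim]) (rule AE_I2, rule bound)
  have "0 \<le> (\<integral>x. r * \<phi> x \<partial>P)" using limi qnn by (intro LIMSEQ_le_const) auto
  hence "0 \<le> (\<integral>x. \<phi> x \<partial>P)" using r_pos by (simp add: zero_le_mult_iff)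
  moreover have "integrable P \<phi>" using iphi r_pos by simp
  ultimately show ?thesis unfolding \<phi>_def by simp
qed

lemma deriv_zero:
  assumes r1: "1 \<le> r" and C: "C \<in> sets borel" and atom: "r = 1 \<Longrightarrow> emeasure P {c} = 0"
    and gmin: "\<And>y. Fc C c \<le> Fc C y"
  shows "integrable P (\<lambda>x. indicator (C - {c}) x * norm (x - c) powr (r - 1) * (inner (c - x) u / norm (c - x)))
     \<and> (\<integral>x. indicator (C - {c}) x * norm (x - c) powr (r - 1) * (inner (c - x) u / norm (c - x)) \<partial>P) = 0"
proof -
  note A = deriv_nonneg[OF r1 C atom gmin, of u]
  note B = deriv_nonneg[OF r1 C atom gmin, of "- u"]
  have "(\<lambda>x. indicator (C - {c}) x * norm (x - c) powr (r - 1) * (inner (c - x) (- u) / norm (c - x)))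
      = (\<lambda>x. - (indicator (C - {c}) x * norm (x - c) powr (r - 1) * (inner (c - x) u / norm (c - x))))"
    by (rule ext) simp
  hence "0 \<le> - (\<integral>x. indicator (C - {c}) x * norm (x - c) powr (r - 1) * (inner (c - x) u / norm (c - x)) \<partial>P)"
    using B by simp
  thus ?thesis using A by simp
qed

end

context qz begin

lemma emP: "emeasure P A = ennreal (measure P A)"
  by (rule finite_measure.emeasure_eq_measure[OF finP])

lemma unif_int:
  assumes C: "C \<in> sets borel" and pos: "0 < emeasure P C" and f: "f \<in> borel_measurable P"
  shows "integral\<^sup>L (uniform_measure P C) f = (\<integral>x. indicator C x * f x \<partial>P) / measure P C"
proof -
  have m: "0 < measure P C" using pos unfolding emP by simp
  have eqd: "(\<lambda>x. indicator C x / emeasure P C) = (\<lambda>x. ennreal (indicator C x / measure P C))"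
  proof
    fix x show "indicator C x / emeasure P C = ennreal (indicator C x / measure P C)"
      unfolding emP using m by (cases "x \<in> C") (auto simp: divide_ennreal[symmetric])
  qed
  have "uniform_measure P C = density P (\<lambda>x. ennreal (indicator C x / measure P C))"
    unfolding uniform_measure_def eqd ..
  moreover have "(\<lambda>x. indicator C x / measure P C) \<in> borel_measurable P"
    by (intro borel_measurable_divide borel_measurable_indicator sets_P' C borel_measurable_const)
  ultimately have "integral\<^sup>L (uniform_measure P C) f = (\<integral>x. (indicator C x / measure P C) *\<^sub>R f x \<partial>P)"
    using f m by (simp add: integral_density)
  also have "\<dots> = (\<integral>x. indicator C x * f x / measure P C \<partial>P)" by simp
  also have "\<dots> = (\<integral>x. indicator C x * f x \<partial>P) / measure P C" by simp
  finally show ?thesis .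
qed

end

context qzm begin

lemma dist1: "distortion Q r 1 (\<lambda>_. z) = (\<integral>x. norm (x - z) powr r \<partial>Q)"
  unfolding distortion_def by (simp add: lessThan_Suc)

lemma C_pos:
  assumes i: "i < n" and C: "C \<in> sets borel" and WC: "voronoi_W (a i) (a ` {..<n}) \<subseteq> C"
  shows "0 < emeasure P C"
proof -
  have "0 < emeasure P (voronoi_W (a i) (a ` {..<n}))" by (rule W_pos[OF i])
  also have "\<dots> \<le> emeasure P C" using WC C by (intro emeasure_mono sets_P')
  finally show ?thesis .
qed

lemma vor_claim:
  assumes r1: "1 \<le> r" and i: "i < n" and C: "C \<in> sets borel"
    and WC: "voronoi_W (a i) (a ` {..<n}) \<subseteq> C" and CV: "C \<subseteq> voronoi_V (a i) (a ` {..<n})"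
  shows "distortion (uniform_measure P C) r 1 (\<lambda>_. a i) \<le> distortion (uniform_measure P C) r 1 (\<lambda>_. y)"
proof -
  have pos: "0 < emeasure P C" by (rule C_pos[OF i C WC])
  have m: "0 < measure P C" using pos unfolding emP by simp
  have "distortion (uniform_measure P C) r 1 (\<lambda>_. z) = Fc C z / measure P C" for z
    unfolding dist1 Fc_def by (rule unif_int[OF C pos meas_pow])
  thus ?thesis using F_global[OF r1 i C WC CV, of y] m by (simp add: divide_right_mono)
qed

lemma D_null:
  assumes r1: "1 \<le> r" and atoms: "r = 1 \<Longrightarrow> \<forall>i<n. emeasure P {a i} = 0"
    and i: "i < n" and k: "k < n" and ne: "a k \<noteq> a i"
  shows "emeasure P ((voronoi_V (a i) (a ` {..<n}) \<inter> voronoi_V (a k) (a ` {..<n})) - voronoi_W (a i) (a ` {..<n})) = 0"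
proof -
  define G where "G = a ` {..<n}"
  define W where "W = voronoi_W (a i) G"
  define D where "D = (voronoi_V (a i) G \<inter> voronoi_V (a k) G) - W"
  define c where "c = a i"
  define u where "u = a k - a i"
  have fG: "finite G" unfolding G_def by simp
  have Wb: "W \<in> sets borel" unfolding W_def using open_W[OF fG] by auto
  have Db: "D \<in> sets borel" unfolding D_def by (intro sets.Diff sets.Int borel_closed closed_V Wb)
  have WV: "W \<subseteq> voronoi_V (a i) G" unfolding W_def by (rule W_sub_V)
  have DV: "D \<subseteq> voronoi_V (a i) G" unfolding D_def by auto
  have cW: "c \<in> W" unfolding W_def voronoi_W_def c_def by auto
  have atom: "r = 1 \<Longrightarrow> emeasure P {c} = 0" using atoms i unfolding c_def by auto
  define \<psi> where "\<psi> x = norm (x - c) powr (r - 1) * (inner (c - x) u / norm (c - x))" for x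
  have WDb: "W \<union> D \<in> sets borel" using Wb Db by auto
  have gW: "Fc W c \<le> Fc W y" for y unfolding c_def
    by (rule F_global[OF r1 i Wb]) (use WV in \<open>auto simp: W_def G_def\<close>)
  have gWD: "Fc (W \<union> D) c \<le> Fc (W \<union> D) y" for y unfolding c_def
    by (rule F_global[OF r1 i WDb]) (use WV DV in \<open>auto simp: W_def G_def\<close>)
  have Z1: "integrable P (\<lambda>x. indicator (W - {c}) x * \<psi> x) \<and> (\<integral>x. indicator (W - {c}) x * \<psi> x \<partial>P) = 0"
    using deriv_zero[OF r1 Wb atom gW, of u] unfolding \<psi>_def by (simp add: mult.assoc)
  have Z2: "integrable P (\<lambda>x. indicator ((W \<union> D) - {c}) x * \<psi> x) \<and> (\<integral>x. indicator ((W \<union> D) - {c}) x * \<psi> x \<partial>P) = 0"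
    using deriv_zero[OF r1 WDb atom gWD, of u] unfolding \<psi>_def by (simp add: mult.assoc)
  have ind: "indicator ((W \<union> D) - {c}) x * \<psi> x = indicator (W - {c}) x * \<psi> x + indicator D x * \<psi> x" for x
    using cW unfolding D_def by (auto simp: indicator_def)
  have iD: "integrable P (\<lambda>x. indicator D x * \<psi> x)"
  proof -
    have "integrable P (\<lambda>x. indicator ((W \<union> D) - {c}) x * \<psi> x - indicator (W - {c}) x * \<psi> x)"
      using Z1 Z2 by (intro Bochner_Integration.integrable_diff) auto
    thus ?thesis unfolding ind by simp
  qed
  have "(\<integral>x. indicator D x * \<psi> x \<partial>P) = 0"
    using Z1 Z2 iD unfolding ind by (simp add: integral_add)
  hence I0: "(\<integral>x. - (indicator D x * \<psi> x) \<partial>P) = 0" by simp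
  have neg: "\<psi> x < 0" if xD: "x \<in> D" for x
  proof -
    have xc: "x \<noteq> c" using xD cW unfolding D_def by auto
    have eqn: "norm (x - a k) = norm (x - c)"
      using xD unfolding D_def voronoi_V_def G_def c_def using i k by (auto intro!: antisym)
    have "norm (x - a k)^2 = norm (x - c)^2 - 2 * 1 * inner (x - c) u + 1^2 * norm u^2"
    proof -
      have "x - a k = (x - c) - 1 *\<^sub>R u" unfolding c_def u_def by simp
      thus ?thesis by (simp only: norm_diff_scale_sq)
    qed
    hence "2 * inner (x - c) u = norm u^2" using eqn by simp
    moreover have "norm u > 0" using ne unfolding u_def by simp
    hence "norm u^2 > 0" by simp
    ultimately have "inner (x - c) u > 0" by linarith
    hence "inner (c - x) u < 0" by (simp add: inner_diff_left)
    moreover have "norm (x - c) powr (r - 1) > 0" using xc by simp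
    moreover have "norm (c - x) > 0" using xc by simp
    ultimately show ?thesis unfolding \<psi>_def by (simp add: mult_pos_neg divide_neg_pos)
  qed
  have "AE x in P. - (indicator D x * \<psi> x) = 0"
  proof (subst integral_nonneg_eq_0_iff_AE[symmetric])
    show "integrable P (\<lambda>x. - (indicator D x * \<psi> x))" using iD by simp
    show "AE x in P. 0 \<le> - (indicator D x * \<psi> x)"
      by (rule AE_I2) (auto simp: indicator_def dest: neg intro: less_imp_le)
    show "(\<integral>x. - (indicator D x * \<psi> x) \<partial>P) = 0" by (rule I0)
  qed
  hence "AE x in P. x \<notin> D" by eventually_elim (auto simp: indicator_def dest: neg)
  hence "emeasure P D = 0" using Db by (subst (asm) AE_iff_measurable[OF sets_P' _, of D]) (auto simp: space_P)
  thus ?thesis unfolding D_def W_def G_def .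
qed

end

context qzm begin

abbreviation "Gam \<equiv> a ` {..<n}"

lemma nearest: "\<exists>i<n. x \<in> voronoi_V (a i) Gam"
proof -
  have "(MIN j\<in>{..<n}. norm (x - a j)) \<in> (\<lambda>j. norm (x - a j)) ` {..<n}"
    using n_pos by (intro Min_in) (auto simp: lessThan_empty_iff)
  then obtain i where i: "i < n" "(MIN j\<in>{..<n}. norm (x - a j)) = norm (x - a i)" by auto
  have "x \<in> voronoi_V (a i) Gam" unfolding voronoi_V_def
  proof (intro CollectI ballI)
    fix c assume "c \<in> Gam"
    then obtain j where j: "j < n" "c = a j" by auto
    have "(MIN j\<in>{..<n}. norm (x - a j)) \<le> norm (x - a j)" using j by (intro Min_le) auto
    thus "norm (x - a i) \<le> norm (x - c)" using i j by simp
  qed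
  thus ?thesis using i by blast
qed

lemma admissible_P:
  assumes r1: "1 \<le> r" and atoms: "r = 1 \<Longrightarrow> \<forall>i<n. emeasure P {a i} = 0"
  shows "admissible P Gam"
proof -
  define D where "D i k = (voronoi_V (a i) Gam \<inter> voronoi_V (a k) Gam) - voronoi_W (a i) Gam" for i k
  have Db: "D i k \<in> sets borel" for i k
    unfolding D_def by (intro sets.Diff sets.Int borel_closed closed_V borel_open open_W) auto
  have "AE x in P. x \<notin> D i k" if "i < n" "k < n" "a k \<noteq> a i" for i k
  proof -
    have "emeasure P (D i k) = 0" unfolding D_def by (rule D_null[OF r1 atoms that])
    thus ?thesis using Db by (subst AE_iff_measurable[OF sets_P' _, of "D i k"]) (auto simp: space_P)
  qed
  hence "AE x in P. \<forall>i\<in>{..<n}. \<forall>k\<in>{..<n}. a k \<noteq> a i \<longrightarrow> x \<notin> D i k"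
    by (intro AE_finite_allI) auto
  hence ae: "AE x in P. x \<in> (\<Union>b\<in>Gam. voronoi_W b Gam)"
  proof eventually_elim
    fix x assume H: "\<forall>i\<in>{..<n}. \<forall>k\<in>{..<n}. a k \<noteq> a i \<longrightarrow> x \<notin> D i k"
    show "x \<in> (\<Union>b\<in>Gam. voronoi_W b Gam)"
    proof (rule ccontr)
      assume nx: "x \<notin> (\<Union>b\<in>Gam. voronoi_W b Gam)"
      obtain i where i: "i < n" "x \<in> voronoi_V (a i) Gam" using nearest by blast
      have "x \<notin> voronoi_W (a i) Gam" using nx i by auto
      then obtain k where k: "k < n" "a k \<noteq> a i" "norm (x - a k) \<le> norm (x - a i)"
        unfolding voronoi_W_def by (auto simp: not_less)
      have "x \<in> voronoi_V (a k) Gam" using i(2) k(3) unfolding voronoi_V_def by force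
      hence "x \<in> D i k" unfolding D_def using i \<open>x \<notin> voronoi_W (a i) Gam\<close> by auto
      thus False using H i k by auto
    qed
  qed
  have "(\<Union>b\<in>Gam. voronoi_W b Gam) \<in> sets P"
    by (intro sets_P' borel_open open_UN ballI open_W) auto
  hence "emeasure P (\<Union>b\<in>Gam. voronoi_W b Gam) = 1"
    using prob_space.emeasure_eq_1_AE[OF prob _ ae] by simp
  thus ?thesis unfolding admissible_def .
qed

definition idx where "idx x = (LEAST j. j < n \<and> x \<in> voronoi_V (a j) Gam)"

lemma idx_prop: "idx x < n \<and> x \<in> voronoi_V (a (idx x)) Gam"
  unfolding idx_def using nearest[of x] by (rule LeastI_ex)

lemma idx_min: "j < idx x \<Longrightarrow> x \<notin> voronoi_V (a j) Gam"
  using not_less_Least[of j "\<lambda>j. j < n \<and> x \<in> voronoi_V (a j) Gam"] idx_prop[of x]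
  unfolding idx_def by auto

definition Cp where "Cp b = {x. a (idx x) = b}"

lemma Cp_eq: "Cp b = (\<Union>j\<in>{j. j < n \<and> a j = b}. voronoi_V (a j) Gam - (\<Union>l\<in>{..<j}. voronoi_V (a l) Gam))"
proof (intro equalityI subsetI)
  fix x assume "x \<in> Cp b"
  hence "a (idx x) = b" unfolding Cp_def by simp
  thus "x \<in> (\<Union>j\<in>{j. j < n \<and> a j = b}. voronoi_V (a j) Gam - (\<Union>l\<in>{..<j}. voronoi_V (a l) Gam))"
    using idx_prop[of x] idx_min[of _ x] by auto
next
  fix x assume "x \<in> (\<Union>j\<in>{j. j < n \<and> a j = b}. voronoi_V (a j) Gam - (\<Union>l\<in>{..<j}. voronoi_V (a l) Gam))"
  then obtain j where j: "j < n" "a j = b" "x \<in> voronoi_V (a j) Gam" "\<And>l. l < j \<Longrightarrow> x \<notin> voronoi_V (a l) Gam"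
    by auto
  have "idx x = j" unfolding idx_def
  proof (rule Least_equality)
    show "j < n \<and> x \<in> voronoi_V (a j) Gam" using j by simp
    fix y assume "y < n \<and> x \<in> voronoi_V (a y) Gam"
    thus "j \<le> y" using j(4) by (meson not_le)
  qed
  thus "x \<in> Cp b" unfolding Cp_def using j by simp
qed

lemma Cp_borel: "Cp b \<in> sets borel"
  unfolding Cp_eq by (intro sets.finite_UN sets.Diff borel_closed closed_V) auto

lemma Cp_V: "Cp b \<subseteq> voronoi_V b Gam"
  unfolding Cp_def using idx_prop by auto

lemma W_Cp: assumes i: "i < n" shows "voronoi_W (a i) Gam \<subseteq> Cp (a i)"
proof
  fix x assume x: "x \<in> voronoi_W (a i) Gam"
  have "a (idx x) = a i"
  proof (rule ccontr)
    assume ne: "a (idx x) \<noteq> a i"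
    have "a (idx x) \<in> Gam - {a i}" using idx_prop[of x] ne by auto
    hence "norm (x - a i) < norm (x - a (idx x))" using x unfolding voronoi_W_def by auto
    moreover have "norm (x - a (idx x)) \<le> norm (x - a i)" using idx_prop[of x] i unfolding voronoi_V_def by auto
    ultimately show False by simp
  qed
  thus "x \<in> Cp (a i)" unfolding Cp_def by simp
qed

lemma partition: "voronoi_partition Cp Gam"
  unfolding voronoi_partition_def
proof (intro conjI ballI impI)
  fix b assume "b \<in> Gam" show "Cp b \<in> sets borel" by (rule Cp_borel)
next
  fix b assume "b \<in> Gam" show "Cp b \<subseteq> voronoi_V b Gam" by (rule Cp_V)
next
  fix b c :: 'a assume "b \<noteq> c" thus "Cp b \<inter> Cp c = {}" unfolding Cp_def by auto
next
  show "(\<Union>b\<in>Gam. Cp b) = UNIV"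
  proof (intro equalityI subsetI)
    fix x :: 'a
    have "x \<in> Cp (a (idx x))" unfolding Cp_def by simp
    thus "x \<in> (\<Union>b\<in>Gam. Cp b)" using idx_prop[of x] by auto
  qed auto
qed

lemma stationary:
  assumes r1: "1 \<le> r" and atoms: "r = 1 \<Longrightarrow> \<forall>i<n. emeasure P {a i} = 0" and inj: "inj_on a {..<n}"
  shows "stationary_quantizer P r n Gam"
  unfolding stationary_quantizer_def
proof (intro conjI impI exI[of _ Cp] ballI allI)
  show "finite Gam" by simp
  show "card Gam = n" using inj by (simp add: card_image)
  assume "r = 1"
  hence "\<forall>i<n. emeasure P {a i} = 0" using atoms by simp
  thus "emeasure P Gam = 0"
    by (subst emeasure_eq_sum_singleton) (auto intro!: sum.neutral sets_P')
next
  show "voronoi_partition Cp Gam" by (rule partition)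
next
  fix b assume "b \<in> Gam"
  then obtain i where i: "i < n" "b = a i" by auto
  show "0 < emeasure P (Cp b)" unfolding i(2) by (rule C_pos[OF i(1) Cp_borel W_Cp[OF i(1)]])
  fix u
  have atom: "r = 1 \<Longrightarrow> emeasure P {a i} = 0" using atoms i by auto
  have gm: "Fc (Cp (a i)) (a i) \<le> Fc (Cp (a i)) y" for y
    by (rule F_global[OF r1 i(1) Cp_borel W_Cp[OF i(1)] Cp_V])
  note Z = deriv_zero[OF r1 Cp_borel atom gm, of u]
  show "integrable P (\<lambda>x. indicator (Cp b - {b}) x * norm (x - b) powr (r - 1) * (inner (b - x) u / norm (b - x)))"
    using Z unfolding i(2) by simp
  show "(\<integral>x. indicator (Cp b - {b}) x * norm (x - b) powr (r - 1) * (inner (b - x) u / norm (b - x)) \<partial>P) = 0"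
    using Z unfolding i(2) by simp
qed

end

lemma convexD2:
  assumes "convex K" "x \<in> K" "y \<in> K" "0 \<le> u" "u \<le> 1"
  shows "(1 - u) *\<^sub>R x + u *\<^sub>R y \<in> K"
  using assms unfolding convex_def by auto

lemma seg_in:
  assumes cv: "convex K" and aK: "a \<in> K" and y: "a + s1 *\<^sub>R y \<in> K" and s: "0 < s" "s \<le> s1"
  shows "a + s *\<^sub>R y \<in> K"
proof -
  have s1: "s1 > 0" using s by simp
  have "(1 - s / s1) *\<^sub>R a + (s / s1) *\<^sub>R (a + s1 *\<^sub>R y) \<in> K"
    using s s1 by (intro convexD2[OF cv aK y]) auto
  moreover have "(1 - s / s1) *\<^sub>R a + (s / s1) *\<^sub>R (a + s1 *\<^sub>R y) = a + s *\<^sub>R y"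
    using s1 by (simp add: algebra_simps)
  ultimately show ?thesis by simp
qed

lemma normal_exists:
  fixes K :: "'a::{real_inner,complete_space} set"
  assumes cv: "convex K" and aK: "a \<in> K" and ani: "a \<notin> interior K"
    and c0: "ball c0 \<rho> \<subseteq> K" and rho: "\<rho> > 0"
  shows "\<exists>\<nu>. \<nu> \<noteq> 0 \<and> (\<forall>x\<in>K. inner (x - a) \<nu> \<le> 0)"
proof -
  define S where "S = {y. \<exists>s>0. a + s *\<^sub>R y \<in> K}"
  have S_scale: "\<mu> *\<^sub>R y \<in> S" if yS: "y \<in> S" and mu: "\<mu> > 0" for y \<mu>
  proof -
    obtain s where "s > 0" "a + s *\<^sub>R y \<in> K" using yS unfolding S_def by auto
    hence "a + (s / \<mu>) *\<^sub>R (\<mu> *\<^sub>R y) \<in> K" using mu by simp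
    thus ?thesis unfolding S_def using \<open>s > 0\<close> mu by (intro CollectI exI[of _ "s / \<mu>"]) auto
  qed
  have KS: "x - a \<in> S" if "x \<in> K" for x unfolding S_def using that by (intro CollectI exI[of _ 1]) auto
  have S0: "0 \<in> S" using KS[OF aK] by simp
  have cS: "convex S" unfolding convex_def
  proof (intro ballI allI impI)
    fix y1 y2 and u v :: real assume y: "y1 \<in> S" "y2 \<in> S" and uv: "0 \<le> u" "0 \<le> v" "u + v = 1"
    obtain s1 where s1: "s1 > 0" "a + s1 *\<^sub>R y1 \<in> K" using y(1) unfolding S_def by auto
    obtain s2 where s2: "s2 > 0" "a + s2 *\<^sub>R y2 \<in> K" using y(2) unfolding S_def by auto
    define s where "s = min s1 s2"
    have s: "s > 0" "s \<le> s1" "s \<le> s2" unfolding s_def using s1 s2 by auto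
    have k1: "a + s *\<^sub>R y1 \<in> K" by (rule seg_in[OF cv aK s1(2) s(1,2)])
    have k2: "a + s *\<^sub>R y2 \<in> K" by (rule seg_in[OF cv aK s2(2) s(1,3)])
    have "(1 - v) *\<^sub>R (a + s *\<^sub>R y1) + v *\<^sub>R (a + s *\<^sub>R y2) \<in> K"
      using uv by (intro convexD2[OF cv k1 k2]) auto
    moreover have "(1 - v) *\<^sub>R (a + s *\<^sub>R y1) + v *\<^sub>R (a + s *\<^sub>R y2) = a + s *\<^sub>R (u *\<^sub>R y1 + v *\<^sub>R y2)"
    proof -
      have u: "u = 1 - v" using uv by simp
      show ?thesis unfolding u by (simp add: algebra_simps)
    qed
    ultimately show "u *\<^sub>R y1 + v *\<^sub>R y2 \<in> S" unfolding S_def using s by auto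
  qed
  define T where "T = closure S"
  have cT: "convex T" unfolding T_def using cS by simp
  have clT: "closed T" unfolding T_def by simp
  have ST: "S \<subseteq> T" unfolding T_def by (rule closure_subset)
  have neT: "T \<noteq> {}" using S0 ST by auto
  define z where "z = a - c0"
  obtain p where pT: "p \<in> T" and pv: "\<And>w. w \<in> T \<Longrightarrow> inner (z - p) (w - p) \<le> 0"
    using proj_exists[OF clT cT neT, of z] by blast
  define \<nu> where "\<nu> = z - p"
  have "0 \<in> T" using S0 ST by auto
  hence "inner \<nu> (0 - p) \<le> 0" unfolding \<nu>_def by (rule pv)
  moreover have "2 *\<^sub>R p \<in> T"
  proof -
    obtain X where X: "\<And>k. X k \<in> S" "X \<longlonglongrightarrow> p" using pT unfolding T_def closure_sequential by blast
    have "(\<lambda>k. 2 *\<^sub>R X k) \<longlonglongrightarrow> 2 *\<^sub>R p" by (intro tendsto_intros X(2))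
    moreover have "\<forall>k. 2 *\<^sub>R X k \<in> S" using S_scale X(1) by auto
    ultimately show ?thesis unfolding T_def closure_sequential
      by (intro exI[of _ "\<lambda>k. 2 *\<^sub>R X k"]) simp
  qed
  hence "inner \<nu> (2 *\<^sub>R p - p) \<le> 0" unfolding \<nu>_def by (rule pv)
  ultimately have nup: "inner \<nu> p = 0" by (simp add: inner_diff_right scaleR_2 inner_add_right)
  have sup: "\<forall>x\<in>K. inner (x - a) \<nu> \<le> 0"
  proof
    fix x assume "x \<in> K"
    hence "x - a \<in> T" using KS ST by auto
    hence "inner \<nu> ((x - a) - p) \<le> 0" unfolding \<nu>_def by (rule pv)
    thus "inner (x - a) \<nu> \<le> 0" using nup by (simp add: inner_diff_right inner_commute)
  qed
  have "\<nu> \<noteq> 0"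
  proof
    assume "\<nu> = 0"
    hence "z \<in> closure S" using pT unfolding \<nu>_def T_def by simp
    then obtain y where yS: "y \<in> S" and yz: "dist y z < \<rho> / 2"
      unfolding closure_approachable using rho by (meson half_gt_zero)
    obtain s where s: "s > 0" "a + s *\<^sub>R y \<in> K" using yS unfolding S_def by auto
    define x1 where "x1 = a + s *\<^sub>R y"
    define \<delta> where "\<delta> = s * \<rho> / (2 * (1 + s))"
    have d0: "\<delta> > 0" unfolding \<delta>_def using s rho by simp
    have "ball a \<delta> \<subseteq> K"
    proof
      fix q assume q: "q \<in> ball a \<delta>"
      define c' where "c' = c0 - (y - z) + ((1 + s) / s) *\<^sub>R (q - a)"
      have "norm (c' - c0) \<le> norm (y - z) + norm (((1 + s) / s) *\<^sub>R (q - a))"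
        unfolding c'_def using norm_triangle_ineq4[of "((1 + s) / s) *\<^sub>R (q - a)" "y - z"]
        by (simp add: algebra_simps)
      also have "norm (((1 + s) / s) *\<^sub>R (q - a)) = ((1 + s) / s) * norm (q - a)"
        using s by simp
      also have "((1 + s) / s) * norm (q - a) < ((1 + s) / s) * \<delta>"
        using q s by (intro mult_strict_left_mono) (auto simp: dist_norm norm_minus_commute)
      also have "((1 + s) / s) * \<delta> = \<rho> / 2"
      proof -
        have sp: "s * (1 + s) \<noteq> 0" using s by simp
        have "((1 + s) / s) * \<delta> = ((s * (1 + s)) * \<rho>) / ((s * (1 + s)) * 2)"
          unfolding \<delta>_def times_divide_times_eq by (simp add: mult_ac)
        also have "\<dots> = \<rho> / 2" using sp by (rule nonzero_mult_divide_mult_cancel_left)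
        finally show ?thesis .
      qed
      finally have "norm (c' - c0) < \<rho>" using yz by (simp add: dist_norm)
      hence c'K: "c' \<in> K" using c0 by (auto simp: dist_norm norm_minus_commute)
      have "(1 - s / (1 + s)) *\<^sub>R x1 + (s / (1 + s)) *\<^sub>R c' \<in> K"
        using s by (intro convexD2[OF cv _ c'K]) (auto simp: x1_def)
      moreover have "(1 - s / (1 + s)) *\<^sub>R x1 + (s / (1 + s)) *\<^sub>R c' = q"
      proof -
        have e1: "s *\<^sub>R c' = s *\<^sub>R c0 - s *\<^sub>R (y - z) + (1 + s) *\<^sub>R (q - a)"
        proof -
          have ss: "s * ((1 + s) / s) = 1 + s" using s by simp
          show ?thesis unfolding c'_def by (simp only: scaleR_add_right scaleR_diff_right scaleR_scaleR ss)
        qed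
        have "x1 + s *\<^sub>R c' = (1 + s) *\<^sub>R q"
          unfolding e1 x1_def z_def by (simp add: algebra_simps)
        note X = this
        have h1: "1 - s / (1 + s) = 1 / (1 + s)" using s by (simp add: field_simps)
        have h2: "s / (1 + s) = (1 / (1 + s)) * s" by simp
        have "(1 - s / (1 + s)) *\<^sub>R x1 + (s / (1 + s)) *\<^sub>R c' = (1 / (1 + s)) *\<^sub>R (x1 + s *\<^sub>R c')"
          unfolding h1 unfolding h2 by (simp only: scaleR_add_right scaleR_scaleR)
        also have "\<dots> = (1 / (1 + s)) *\<^sub>R ((1 + s) *\<^sub>R q)" using X by simp
        also have "\<dots> = q" using s by simp
        finally show ?thesis .
      qed
      ultimately show "q \<in> K" by simp
    qed
    hence "a \<in> interior K" using d0 unfolding mem_interior by blast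
    thus False using ani by simp
  qed
  thus ?thesis using sup by blast
qed

lemma interior_strict:
  fixes K :: "'a::real_inner set"
  assumes x: "x \<in> interior K" and nu: "\<nu> \<noteq> 0" and sup: "\<forall>y\<in>K. inner (y - a) \<nu> \<le> 0"
  shows "inner (x - a) \<nu> < 0"
proof -
  obtain e where e: "e > 0" "ball x e \<subseteq> K" using x unfolding mem_interior by blast
  have nn: "norm \<nu> > 0" using nu by simp
  define y where "y = x + (e / (2 * norm \<nu>)) *\<^sub>R \<nu>"
  have "dist x y = e / 2" unfolding y_def dist_norm using nn e by simp
  hence "y \<in> K" using e by auto
  hence "inner (y - a) \<nu> \<le> 0" using sup by blast
  moreover have "inner (y - a) \<nu> = inner (x - a) \<nu> + (e / (2 * norm \<nu>)) * (norm \<nu>)^2"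
    unfolding y_def by (simp add: inner_add_left inner_diff_left power2_norm_eq_inner algebra_simps)
  moreover have "(e / (2 * norm \<nu>)) * (norm \<nu>)^2 > 0" using e nn by simp
  ultimately show ?thesis by linarith
qed

context qzm begin

lemma part3:
  assumes r2: "2 \<le> r" and intK: "interior K \<noteq> {}" and i: "i < n"
  shows "a i \<in> interior K"
proof (rule ccontr)
  assume ani: "a i \<notin> interior K"
  have aK: "a i \<in> K" by (rule part1[OF i])
  obtain c0 where "c0 \<in> interior K" using intK by auto
  then obtain \<rho> where rho: "\<rho> > 0" "ball c0 \<rho> \<subseteq> K" unfolding mem_interior by blast
  obtain \<nu> where nu: "\<nu> \<noteq> 0" "\<forall>x\<in>K. inner (x - a i) \<nu> \<le> 0"
    using normal_exists[OF convex_K aK ani rho(2) rho(1)] by blast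
  have r1: "1 \<le> r" using r2 by simp
  define V where "V = voronoi_V (a i) Gam"
  have Vb: "V \<in> sets borel" unfolding V_def by (intro borel_closed closed_V)
  have atom: "r = 1 \<Longrightarrow> emeasure P {a i} = 0" using r2 by simp
  have gm: "Fc V (a i) \<le> Fc V y" for y
    using F_global[OF r1 i Vb] W_sub_V unfolding V_def by blast
  define \<phi> where "\<phi> x = indicator (V - {a i}) x * norm (x - a i) powr (r - 1) * (inner (a i - x) \<nu> / norm (a i - x))" for x
  have Z: "integrable P \<phi> \<and> integral\<^sup>L P \<phi> = 0"
    unfolding \<phi>_def by (rule deriv_zero[OF r1 Vb atom gm])
  have nnK: "0 \<le> \<phi> x" if "x \<in> K" for x
  proof -
    have "0 \<le> inner (a i - x) \<nu>" using nu(2) that by (simp add: inner_diff_left)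
    thus ?thesis unfolding \<phi>_def by simp
  qed
  have ae0: "AE x in P. \<phi> x = 0"
  proof (subst integral_nonneg_eq_0_iff_AE[symmetric])
    show "integrable P \<phi>" using Z by simp
    show "AE x in P. 0 \<le> \<phi> x" using AE_K by eventually_elim (rule nnK)
    show "integral\<^sup>L P \<phi> = 0" using Z by simp
  qed
  obtain \<delta> where dl: "\<delta> > 0" "ball (a i) \<delta> \<subseteq> voronoi_W (a i) Gam"
    using ball_W[of Gam "a i"] by auto
  define L where "L = \<rho> + norm (c0 - a i) + 1"
  have L0: "L > 0" unfolding L_def using rho(1) norm_ge_zero[of "c0 - a i"] by linarith
  define s where "s = min (1/2) (\<delta> / L)"
  have s: "0 < s" "s \<le> 1" unfolding s_def using dl L0 by auto
  have sL: "s * L \<le> \<delta>" unfolding s_def using L0 by (simp add: min_def field_simps)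
  define m where "m = a i + s *\<^sub>R (c0 - a i)"
  define Ob where "Ob = ball m (s * \<rho>)"
  have OK: "Ob \<subseteq> K"
  proof
    fix y assume y: "y \<in> Ob"
    define z' where "z' = c0 + (1 / s) *\<^sub>R (y - m)"
    have "dist c0 z' = (1 / s) * norm (y - m)" unfolding z'_def dist_norm using s by simp
    also have "\<dots> < (1 / s) * (s * \<rho>)" using y s unfolding Ob_def
      by (intro mult_strict_left_mono) (auto simp: dist_norm norm_minus_commute)
    also have "\<dots> = \<rho>" using s by simp
    finally have "z' \<in> K" using rho(2) by auto
    hence "(1 - s) *\<^sub>R a i + s *\<^sub>R z' \<in> K" using s by (intro convexD2[OF convex_K aK]) auto
    moreover have "(1 - s) *\<^sub>R a i + s *\<^sub>R z' = y"
    proof -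
      have ss: "s * (1 / s) = 1" using s by simp
      have "s *\<^sub>R z' = s *\<^sub>R c0 + (y - m)" unfolding z'_def
        by (simp only: scaleR_add_right scaleR_scaleR ss scaleR_one)
      thus ?thesis unfolding m_def by (simp add: algebra_simps)
    qed
    ultimately show "y \<in> K" by simp
  qed
  have OW: "Ob \<subseteq> voronoi_W (a i) Gam"
  proof
    fix y assume y: "y \<in> Ob"
    have "norm (y - a i) \<le> norm (y - m) + norm (m - a i)"
      using norm_triangle_ineq[of "y - m" "m - a i"] by simp
    also have "norm (m - a i) = s * norm (c0 - a i)" unfolding m_def using s by simp
    also have "norm (y - m) < s * \<rho>" using y unfolding Ob_def by (simp add: dist_norm norm_minus_commute)
    finally have "norm (y - a i) < s * (\<rho> + norm (c0 - a i))" by (simp add: algebra_simps)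
    also have "\<dots> \<le> s * L" unfolding L_def using s by (intro mult_left_mono) auto
    finally have "y \<in> ball (a i) \<delta>" using sL by (simp add: dist_norm norm_minus_commute)
    thus "y \<in> voronoi_W (a i) Gam" using dl by auto
  qed
  have pos: "\<phi> y > 0" if y: "y \<in> Ob" for y
  proof -
    have "y \<in> interior K" using y OK unfolding Ob_def
      by (meson interior_maximal open_ball subsetD)
    hence neg: "inner (y - a i) \<nu> < 0" by (rule interior_strict[OF _ nu])
    hence ya: "y \<noteq> a i" by auto
    have yV: "y \<in> V" using OW y W_sub_V unfolding V_def by blast
    have "inner (a i - y) \<nu> > 0" using neg by (simp add: inner_diff_left)
    moreover have "norm (y - a i) powr (r - 1) > 0" using ya by simp
    moreover have "norm (a i - y) > 0" using ya by simp
    ultimately show ?thesis unfolding \<phi>_def using yV ya by simp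
  qed
  have "AE x in P. x \<notin> Ob" using ae0 by eventually_elim (auto dest: pos)
  hence "emeasure P Ob = 0"
    by (subst (asm) AE_iff_measurable[OF sets_P', of Ob]) (auto simp: space_P Ob_def)
  moreover have "emeasure P Ob > 0"
  proof -
    have "m \<in> Ob" unfolding Ob_def using s rho by simp
    hence "m \<in> K" using OK by auto
    thus ?thesis using \<open>m \<in> Ob\<close> unfolding Ob_def by (intro inK_pos) auto
  qed
  ultimately show False by simp
qed

end

theorem theorem2p2:
  fixes P :: "'a::{real_inner, complete_space} measure"
    and r :: real and n :: nat and a :: "nat \<Rightarrow> 'a"
  assumes prob: "prob_space P"
    and radon: "radon_measure P"
    and r_pos: "0 < r"
    and moment: "integrable P (\<lambda>x. norm x powr r)"
    and n_pos: "1 \<le> n"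
    and K_convex: "convex (measure_support P)"
    and strict_min: "strict_local_min n (distortion P r n) a"
  shows "(\<forall>i<n. a i \<in> measure_support P)
    \<and> ((\<forall>i<n. a i islimpt measure_support P) \<longrightarrow>
         inj_on a {..<n}
       \<and> (1 \<le> r \<longrightarrow> (\<forall>i<n. \<forall>C\<in>sets borel.
              voronoi_W (a i) (a ` {..<n}) \<subseteq> C \<and> C \<subseteq> voronoi_V (a i) (a ` {..<n}) \<longrightarrow>
              (\<forall>y. distortion (uniform_measure P C) r 1 (\<lambda>_. a i)
                     \<le> distortion (uniform_measure P C) r 1 (\<lambda>_. y))))
       \<and> (1 \<le> r \<and> (r = 1 \<longrightarrow> (\<forall>i<n. emeasure P {a i} = 0)) \<longrightarrow>
              stationary_quantizer P r n (a ` {..<n}) \<and> admissible P (a ` {..<n})))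
    \<and> (2 \<le> r \<and> (2 < r \<longrightarrow> (\<forall>i<n. emeasure P {a i} = 0))
         \<and> interior (measure_support P) \<noteq> {} \<longrightarrow>
         (\<forall>i<n. a i \<in> interior (measure_support P)))"
proof -
  interpret qzm P r n a
    by (rule qzm.intro[OF qz.intro[OF prob radon r_pos moment] qzm_axioms.intro[OF n_pos K_convex strict_min]])
  have KK: "measure_support P = K" unfolding K_def ..
  show ?thesis unfolding KK
  proof (intro conjI impI allI ballI)
    fix i assume "i < n" thus "a i \<in> K" by (rule part1)
  next
    assume H: "\<forall>i<n. a i islimpt K"
    have "a 0 islimpt K" using H n_pos by auto
    then obtain x where "x \<in> K" "x \<noteq> a 0" unfolding islimpt_def by blast
    hence "x - a 0 \<noteq> 0" by simp
    thus "inj_on a {..<n}" by (rule inj_a)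
  next
    fix i C y assume r1: "1 \<le> r" and i: "i < n" and C: "C \<in> sets borel"
      and WCV: "voronoi_W (a i) (a ` {..<n}) \<subseteq> C \<and> C \<subseteq> voronoi_V (a i) (a ` {..<n})"
    show "distortion (uniform_measure P C) r 1 (\<lambda>_. a i) \<le> distortion (uniform_measure P C) r 1 (\<lambda>_. y)"
      using vor_claim[OF r1 i C] WCV by blast
  next
    assume H: "\<forall>i<n. a i islimpt K" and R: "1 \<le> r \<and> (r = 1 \<longrightarrow> (\<forall>i<n. emeasure P {a i} = 0))"
    have "a 0 islimpt K" using H n_pos by auto
    then obtain x where "x \<in> K" "x \<noteq> a 0" unfolding islimpt_def by blast
    hence "x - a 0 \<noteq> 0" by simp
    hence injA: "inj_on a {..<n}" by (rule inj_a)
    show "stationary_quantizer P r n (a ` {..<n})" using R injA by (intro stationary) auto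
  next
    assume R: "1 \<le> r \<and> (r = 1 \<longrightarrow> (\<forall>i<n. emeasure P {a i} = 0))"
    show "admissible P (a ` {..<n})" using R by (intro admissible_P) auto
  next
    fix i assume R: "2 \<le> r \<and> (2 < r \<longrightarrow> (\<forall>i<n. emeasure P {a i} = 0)) \<and> interior K \<noteq> {}" and i: "i < n"
    show "a i \<in> interior K" using R i by (intro part3) auto
  qed
qed

end
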